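(* The size $z_{SS}$ of the non-self-referencing LZSS factorization satisfies (the alphabet being allowed to contain as many distinct characters as needed): substitutions: $\liminf_{n\to\infty}\mathsf{MS}_{\mathrm{sub}}(z_{SS},n)\ge 3$, $\mathsf{AS}_{\mathrm{sub}}(z_{SS},n)\ge 2z_{SS}-\Theta(\sqrt{z_{SS}})$ and $\mathsf{AS}_{\mathrm{sub}}(z_{SS},n)=\Omega(\sqrt n)$; insertions: $\liminf_{n\to\infty}\mathsf{MS}_{\mathrm{ins}}(z_{SS},n)\ge 2$, $\mathsf{AS}_{\mathrm{ins}}(z_{SS},n)\ge z_{SS}-\Theta(\sqrt{z_{SS}})$ and $\mathsf{AS}_{\mathrm{ins}}(z_{SS},n)=\Omega(\sqrt n)$; deletions: $\liminf_{n\to\infty}\mathsf{MS}_{\mathrm{del}}(z_{SS},n)\ge 3$, $\mathsf{AS}_{\mathrm{del}}(z_{SS},n)\ge 2z_{SS}-\Theta(\sqrt{z_{SS}})$ and $\mathsf{AS}_{\mathrm{del}}(z_{SS},n)=\Omega(\sqrt n)$.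
   Context: $\mathsf{ed}$ is the edit distance. $\mathsf{MS}_{\mathrm{sub}}(C,n)=\max_{T\in\Sigma^n}\{C(T')/C(T): T'\in\Sigma^n,\ \mathsf{ed}(T,T')=1\}$, with $\mathsf{MS}_{\mathrm{ins}},\mathsf{MS}_{\mathrm{del}}$ analogous for $T'$ of length $n+1$, resp. $n-1$, and $\mathsf{AS}_\ast$ analogous with $C(T')-C(T)$. Bounds in terms of $z_{SS}$ refer to $z_{SS}(T)$ of the original string and assert existence of strings $T$ (with $z_{SS}(T)$ arbitrarily large) and edited $T'$ achieving them. The non-self-referencing LZSS factorization of $T$ is $T=f_1\cdots f_z$ where each $f_i$ is either the first occurrence in $T$ of a character, or the longest prefix of $f_i\cdots f_z$ that occurs as a substring of $f_1\cdots f_{i-1}$; $z_{SS}(T)=z$. *)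

theory Defs
  imports Complex_Main "HOL-Library.Sublist" "HOL-Library.Landau_Symbols" "HOL-Library.Liminf_Limsup" "HOL-Library.Extended_Real"
begin

fun ed :: "'a list \<Rightarrow> 'a list \<Rightarrow> nat" where
  "ed [] ys = length ys"
| "ed (x # xs) [] = length (x # xs)"
| "ed (x # xs) (y # ys) =
     min (min (Suc (ed xs (y # ys))) (Suc (ed (x # xs) ys)))
         (ed xs ys + (if x = y then 0 else 1))"

definition lpf :: "'a list \<Rightarrow> 'a list \<Rightarrow> nat" where
  "lpf p r = (GREATEST k. k \<le> length r \<and> sublist (take k r) p)"

lemma lpf_ge1:
  assumes "c \<in> set p"
  shows "1 \<le> lpf p (c # s)"
proof -
  obtain u v where "p = u @ c # v" using assms by (meson split_list)
  hence "sublist [c] p" unfolding sublist_def by (intro exI[of _ u] exI[of _ v]) simp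
  hence P: "1 \<le> length (c#s) \<and> sublist (take 1 (c#s)) p" by simp
  show ?thesis unfolding lpf_def
    by (rule Greatest_le_nat[where P = "\<lambda>k. k \<le> length (c#s) \<and> sublist (take k (c#s)) p" and b = "length (c#s)", OF P]) simp
qed

text \<open>lzs p r: number of factors produced when factorizing the remaining suffix r,
  given the already factorized prefix p.\<close>
function lzs :: "'a list \<Rightarrow> 'a list \<Rightarrow> nat" where
  "lzs p [] = 0"
| "lzs p (c # s) =
     (if c \<notin> set p then Suc (lzs (p @ [c]) s)
      else Suc (lzs (p @ take (lpf p (c # s)) (c # s)) (drop (lpf p (c # s)) (c # s))))"
  by pat_completeness auto
termination
proof (relation "measure (\<lambda>(p, r). length r)")
  fix p :: "'a list" and c s
  assume "\<not> c \<notin> set p"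
  hence "1 \<le> lpf p (c # s)" by (intro lpf_ge1) simp
  thus "((p @ take (lpf p (c # s)) (c # s), drop (lpf p (c # s)) (c # s)), p, c # s)
        \<in> measure (\<lambda>(p, r). length r)" by simp
qed auto

definition zss :: "'a list \<Rightarrow> nat" where
  "zss T = lzs [] T"

section \<open>Multiplicative and additive sensitivity (alphabet: nat, i.e. unboundedly many characters)\<close>

definition MS_sub :: "nat \<Rightarrow> real" where
  "MS_sub n = Sup {real (zss T') / real (zss T) | T T' :: nat list.
     length T = n \<and> length T' = n \<and> ed T T' = 1}"
definition MS_ins :: "nat \<Rightarrow> real" where
  "MS_ins n = Sup {real (zss T') / real (zss T) | T T' :: nat list.
     length T = n \<and> length T' = n + 1 \<and> ed T T' = 1}"
definition MS_del :: "nat \<Rightarrow> real" where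
  "MS_del n = Sup {real (zss T') / real (zss T) | T T' :: nat list.
     length T = n \<and> length T' + 1 = n \<and> ed T T' = 1}"

definition AS_sub :: "nat \<Rightarrow> real" where
  "AS_sub n = Sup {real (zss T') - real (zss T) | T T' :: nat list.
     length T = n \<and> length T' = n \<and> ed T T' = 1}"
definition AS_ins :: "nat \<Rightarrow> real" where
  "AS_ins n = Sup {real (zss T') - real (zss T) | T T' :: nat list.
     length T = n \<and> length T' = n + 1 \<and> ed T T' = 1}"
definition AS_del :: "nat \<Rightarrow> real" where
  "AS_del n = Sup {real (zss T') - real (zss T) | T T' :: nat list.
     length T = n \<and> length T' + 1 = n \<and> ed T T' = 1}"

end

theory Submission
  imports Defs
begin


lemma lpf_prop: "lpf p r \<le> length r \<and> sublist (take (lpf p r) r) p"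
  unfolding lpf_def
  by (rule GreatestI_nat[where k=0 and b="length r"]) auto

lemma lpf_le: "lpf p r \<le> length r"
  using lpf_prop by blast

lemma lpf_sub: "sublist (take (lpf p r) r) p"
  using lpf_prop by blast

lemma lpf_ge: "k \<le> length r \<Longrightarrow> sublist (take k r) p \<Longrightarrow> k \<le> lpf p r"
  unfolding lpf_def
  by (rule Greatest_le_nat[where b="length r"]) auto

lemma lpf_less: assumes "\<not> sublist (take k r) p" shows "lpf p r < k"
proof (rule ccontr)
  assume "\<not> lpf p r < k"
  hence "take k (take (lpf p r) r) = take k r" by (simp add: min_def)
  moreover have "sublist (take k (take (lpf p r) r)) p"
    using lpf_sub[of p r] by (meson sublist_order.dual_order.trans sublist_take)
  ultimately show False using assms by simp
qed

lemma lzs_Cons_notin: "c \<notin> set p \<Longrightarrow> lzs p (c # s) = Suc (lzs (p @ [c]) s)"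
  by simp

lemma lzs_Cons_in: "c \<in> set p \<Longrightarrow> lzs p (c # s) =
   Suc (lzs (p @ take (lpf p (c # s)) (c # s)) (drop (lpf p (c # s)) (c # s)))"
  by simp

declare lzs.simps(2)[simp del]

lemma sublist_set: "sublist u p \<Longrightarrow> set u \<subseteq> set p"
  by (metis set_mono_sublist)


lemma MO: "(\<forall>p u s :: 'a list. length (u @ s) = n \<longrightarrow> lzs (p @ u) s \<le> lzs p (u @ s)) \<and>
           (\<forall>p u s :: 'a list. length (u @ s) = n \<longrightarrow> u \<noteq> [] \<longrightarrow> (sublist u p \<or> length u = 1) \<longrightarrow>
               lzs p (u @ s) \<le> Suc (lzs (p @ u) s))"
proof (induction n rule: less_induct)
  case (less n)
  have M: "lzs (p @ u) s \<le> lzs p (u @ s)" if len: "length (u @ s) = n" for p u s :: "'a list"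
  proof (cases u)
    case Nil thus ?thesis by simp
  next
    case (Cons x u')
    show ?thesis
    proof (cases "x \<in> set p")
      case False
      hence "lzs p (u @ s) = Suc (lzs (p @ [x]) (u' @ s))" using Cons by (simp add: lzs_Cons_notin)
      moreover have "lzs ((p @ [x]) @ u') s \<le> lzs (p @ [x]) (u' @ s)"
      proof -
        have "length (u' @ s) < n" using len Cons by simp
        from conjunct1[OF less.IH[OF this]] show ?thesis by blast
      qed
      ultimately show ?thesis using Cons by simp
    next
      case True
      define L where "L = lpf p (u @ s)"
      have L1: "1 \<le> L" unfolding L_def using Cons True lpf_ge1 by fastforce
      have eq: "lzs p (u @ s) = Suc (lzs (p @ take L (u @ s)) (drop L (u @ s)))"
        using lzs_Cons_in[of x p "u' @ s"] True Cons L_def by simp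
      show ?thesis
      proof (cases "L \<le> length u")
        case True
        define f where "f = take L u"
        define u2 where "u2 = drop L u"
        have "take L (u @ s) = f" "drop L (u @ s) = u2 @ s" "u = f @ u2"
          using True by (auto simp: f_def u2_def)
        moreover have "lzs ((p @ f) @ u2) s \<le> lzs (p @ f) (u2 @ s)"
        proof -
          have "length (u2 @ s) < n" using len L1 True Cons by (simp add: u2_def)
          from conjunct1[OF less.IH[OF this]] show ?thesis by blast
        qed
        ultimately show ?thesis using eq by simp
      next
        case False
        define g where "g = take (L - length u) s"
        define s2 where "s2 = drop (L - length u) s"
        have tk: "take L (u @ s) = u @ g" "drop L (u @ s) = s2" "s = g @ s2"
          using False by (auto simp: g_def s2_def)
        have gne: "g \<noteq> []" using False lpf_le[of p "u @ s"] by (auto simp: g_def L_def)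
        have "sublist (u @ g) p" using lpf_sub[of p "u @ s"] tk L_def by simp
        hence "sublist g (p @ u)"
          by (meson sublist_append_leftI sublist_append_rightI sublist_order.order_trans sublist_order.order_refl)
        moreover have "length (g @ s2) < n" using len Cons tk by simp
        ultimately have "lzs (p @ u) (g @ s2) \<le> Suc (lzs ((p @ u) @ g) s2)"
          using conjunct2[OF less.IH[OF \<open>length (g @ s2) < n\<close>]] gne by blast
        thus ?thesis using eq tk by simp
      qed
    qed
  qed
  have O: "lzs p (u @ s) \<le> Suc (lzs (p @ u) s)"
    if len: "length (u @ s) = n" and une: "u \<noteq> []" and v: "sublist u p \<or> length u = 1" for p u s :: "'a list"
  proof -
    obtain x u' where Cons: "u = x # u'" using une by (cases u) auto
    show ?thesis
    proof (cases "x \<in> set p")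
      case False
      hence "\<not> sublist u p" using Cons sublist_set by fastforce
      hence "u = [x]" using v Cons by auto
      thus ?thesis using False by (simp add: lzs_Cons_notin)
    next
      case True
      define L where "L = lpf p (u @ s)"
      have eq: "lzs p (u @ s) = Suc (lzs (p @ take L (u @ s)) (drop L (u @ s)))"
        using lzs_Cons_in[of x p "u' @ s"] True Cons L_def by simp
      have "length u \<le> L"
      proof (cases "sublist u p")
        case True thus ?thesis unfolding L_def by (intro lpf_ge) auto
      next
        case False
        hence "length u = 1" using v by simp
        thus ?thesis using lpf_ge1[of x p "u' @ s"] True Cons L_def by simp
      qed
      define g where "g = take (L - length u) s"
      define s2 where "s2 = drop (L - length u) s"
      have tk: "take L (u @ s) = u @ g" "drop L (u @ s) = s2" "s = g @ s2"
        using \<open>length u \<le> L\<close> by (auto simp: g_def s2_def)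
      have "length (g @ s2) = length s" using tk(3) by simp
      moreover have "length s < n" using len une by (cases u) auto
      ultimately have lt: "length (g @ s2) < n" by simp
      have "lzs ((p @ u) @ g) s2 \<le> lzs (p @ u) (g @ s2)"
        using conjunct1[OF less.IH[OF lt]] by blast
      thus ?thesis using eq tk by simp
    qed
  qed
  show ?case using M O by blast
qed


lemma lzs_mono_prefix: "lzs (p @ u) s \<le> lzs p (u @ s)"
  using MO by blast

lemma lzs_step_le: "u \<noteq> [] \<Longrightarrow> sublist u p \<or> length u = 1 \<Longrightarrow> lzs p (u @ s) \<le> Suc (lzs (p @ u) s)"
  using MO by blast

lemma lzs_step_ge: assumes une: "u \<noteq> []" and nx: "s = [] \<or> \<not> sublist (u @ [hd s]) p"
  shows "Suc (lzs (p @ u) s) \<le> lzs p (u @ s)"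
proof -
  obtain x u' where Cons: "u = x # u'" using une by (cases u) auto
  show ?thesis
  proof (cases "x \<in> set p")
    case False
    hence "lzs p (u @ s) = Suc (lzs (p @ [x]) (u' @ s))" using Cons by (simp add: lzs_Cons_notin)
    moreover have "lzs ((p @ [x]) @ u') s \<le> lzs (p @ [x]) (u' @ s)" by (rule lzs_mono_prefix)
    ultimately show ?thesis using Cons by simp
  next
    case True
    define L where "L = lpf p (u @ s)"
    have L1: "1 \<le> L" unfolding L_def using Cons True lpf_ge1 by fastforce
    have eq: "lzs p (u @ s) = Suc (lzs (p @ take L (u @ s)) (drop L (u @ s)))"
      using lzs_Cons_in[of x p "u' @ s"] True Cons L_def by simp
    have "L \<le> length u"
    proof (cases s)
      case Nil thus ?thesis using lpf_le[of p "u @ s"] L_def by simp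
    next
      case (Cons y s')
      hence "take (Suc (length u)) (u @ s) = u @ [hd s]" by simp
      hence "L < Suc (length u)" unfolding L_def using nx Cons by (intro lpf_less) auto
      thus ?thesis by simp
    qed
    define f where "f = take L u"
    define u2 where "u2 = drop L u"
    have "take L (u @ s) = f" "drop L (u @ s) = u2 @ s" "u = f @ u2"
      using \<open>L \<le> length u\<close> by (auto simp: f_def u2_def)
    moreover have "lzs ((p @ f) @ u2) s \<le> lzs (p @ f) (u2 @ s)" by (rule lzs_mono_prefix)
    ultimately show ?thesis using eq by simp
  qed
qed

lemma lzs_subadd: "lzs p (u @ s) \<le> lzs p u + lzs (p @ u) s"
proof (induction p u rule: lzs.induct)
  case (1 p) thus ?case by simp
next
  case (2 p c s')
  show ?case
  proof (cases "c \<in> set p")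
    case False
    have "lzs p ([c] @ (s' @ s)) \<le> Suc (lzs (p @ [c]) (s' @ s))" by (rule lzs_step_le) auto
    moreover have "lzs (p @ [c]) (s' @ s) \<le> lzs (p @ [c]) s' + lzs (p @ [c] @ s') s"
      using 2(1) False by simp
    moreover have "lzs p (c # s') = Suc (lzs (p @ [c]) s')" using False by (rule lzs_Cons_notin)
    ultimately show ?thesis by simp
  next
    case True
    define L where "L = lpf p (c # s')"
    have L1: "1 \<le> L" unfolding L_def using True lpf_ge1 by fastforce
    define f where "f = take L (c # s')"
    define r where "r = drop L (c # s')"
    have fr: "c # s' = f @ r" by (simp add: f_def r_def)
    have fne: "f \<noteq> []" using L1 by (simp add: f_def)
    have fs: "sublist f p" using lpf_sub[of p "c # s'"] by (simp add: f_def L_def)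
    have eq: "lzs p (c # s') = Suc (lzs (p @ f) r)"
      using lzs_Cons_in[OF True, of s'] by (simp add: f_def r_def L_def)
    have IH: "lzs (p @ f) (r @ s) \<le> lzs (p @ f) r + lzs (p @ f @ r) s"
      using 2(2) True by (simp add: f_def r_def L_def)
    have "lzs p ((c # s') @ s) = lzs p (f @ (r @ s))" using fr by simp
    also have "\<dots> \<le> Suc (lzs (p @ f) (r @ s))" using lzs_step_le fne fs by blast
    also have "\<dots> \<le> Suc (lzs (p @ f) r + lzs (p @ f @ r) s)" using IH by simp
    finally show ?thesis using eq fr by simp
  qed
qed

lemma lzs_mono_app: "lzs p u \<le> lzs p (u @ s)"
proof (induction "length u" arbitrary: p u rule: less_induct)
  case less
  show ?case
  proof (cases u)
    case Nil thus ?thesis by simp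
  next
    case (Cons x u')
    show ?thesis
    proof (cases "x \<in> set p")
      case False
      have e1: "lzs p u = Suc (lzs (p @ [x]) u')" using False Cons by (simp add: lzs_Cons_notin)
      have e2: "lzs p (u @ s) = Suc (lzs (p @ [x]) (u' @ s))" using False Cons by (simp add: lzs_Cons_notin)
      have "lzs (p @ [x]) u' \<le> lzs (p @ [x]) (u' @ s)" using less Cons by simp
      thus ?thesis using e1 e2 by simp
    next
      case True
      define L where "L = lpf p (u @ s)"
      have L1: "1 \<le> L" unfolding L_def using Cons True lpf_ge1 by fastforce
      have eq: "lzs p (u @ s) = Suc (lzs (p @ take L (u @ s)) (drop L (u @ s)))"
        using lzs_Cons_in[of x p "u' @ s"] True Cons L_def by simp
      have Lsub: "sublist (take L (u @ s)) p" using lpf_sub[of p "u @ s"] L_def by simp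
      show ?thesis
      proof (cases "L \<le> length u")
        case True
        define f where "f = take L u"
        define u2 where "u2 = drop L u"
        have fu1: "take L (u @ s) = f" using True by (simp add: f_def)
        have fu2: "drop L (u @ s) = u2 @ s" using True by (simp add: u2_def)
        have fu3: "u = f @ u2" by (simp add: f_def u2_def)
        have fne: "f \<noteq> []" using L1 Cons by (simp add: f_def)
        have fs: "sublist f p" using Lsub fu1 by simp
        have "lzs p u = lzs p (f @ u2)" using fu3 by simp
        also have "\<dots> \<le> Suc (lzs (p @ f) u2)" using lzs_step_le fne fs by blast
        also have "\<dots> \<le> Suc (lzs (p @ f) (u2 @ s))"
        proof -
          have "length u2 < length u" using L1 True by (simp add: u2_def)
          thus ?thesis using less by simp
        qed
        finally show ?thesis using eq fu1 fu2 by simp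
      next
        case False
        have "take L (u @ s) = u @ take (L - length u) s" using False by simp
        hence "sublist u p" using Lsub
          by (metis sublist_append_rightI sublist_order.order_trans sublist_order.order_refl)
        hence "lzs p (u @ []) \<le> Suc (lzs (p @ u) [])" using lzs_step_le Cons by blast
        thus ?thesis using eq by simp
      qed
    qed
  qed
qed

lemma lzs_le_length: "lzs p s \<le> length s"
proof (induction p s rule: lzs.induct)
  case (1 p) thus ?case by simp
next
  case (2 p c s)
  show ?case
  proof (cases "c \<in> set p")
    case False thus ?thesis using 2(1) by (simp add: lzs_Cons_notin)
  next
    case True
    have L1: "1 \<le> lpf p (c # s)" using True lpf_ge1 by fastforce
    have "lzs (p @ take (lpf p (c # s)) (c # s)) (drop (lpf p (c # s)) (c # s))
      \<le> length (drop (lpf p (c # s)) (c # s))" using 2(2) True by simp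
    thus ?thesis using True L1 lpf_le[of p "c # s"] lzs_Cons_in[OF True, of s] by simp
  qed
qed

lemma lzs_pos: "s \<noteq> [] \<Longrightarrow> 1 \<le> lzs p s"
  by (cases s) (auto simp: lzs.simps(2))


fun RL :: "nat \<Rightarrow> nat \<Rightarrow> nat" where
  "RL j i = (if i = 0 \<or> j = 0 then 0 else if i \<le> j then 1 else Suc (RL (2 * j) (i - j)))"

declare RL.simps[simp del]

lemma RL_bound: "1 \<le> j \<Longrightarrow> j * 2 ^ RL j i \<le> 2 * (i + j)"
proof (induction j i rule: RL.induct)
  case (1 j i)
  show ?case
  proof (cases "i = 0")
    case True thus ?thesis by (simp add: RL.simps)
  next
    case False
    show ?thesis
    proof (cases "i \<le> j")
      case True thus ?thesis using False 1(2) by (simp add: RL.simps)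
    next
      case ni: False
      have "2 * j * 2 ^ RL (2 * j) (i - j) \<le> 2 * (i - j + 2 * j)"
        using 1(1) False ni 1(2) by simp
      thus ?thesis using False ni 1(2) by (simp add: RL.simps)
    qed
  qed
qed

definition pw :: "'a list \<Rightarrow> nat \<Rightarrow> 'a list" where
  "pw u k = concat (replicate k u)"

lemma pw_add: "pw u (a + b) = pw u a @ pw u b"
  by (simp add: pw_def replicate_add)

lemma pw_0[simp]: "pw u 0 = []" by (simp add: pw_def)
lemma pw_1[simp]: "pw u 1 = u" by (simp add: pw_def)
lemma pw_Suc: "pw u (Suc k) = u @ pw u k" by (simp add: pw_def)
lemma pw_single: "pw [c] k = replicate k c" by (induction k) (auto simp: pw_def)
lemma pw_length: "length (pw u k) = k * length u" by (induction k) (auto simp: pw_def)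
lemma pw_ne: "u \<noteq> [] \<Longrightarrow> 1 \<le> k \<Longrightarrow> pw u k \<noteq> []"
  by (cases k) (auto simp: pw_Suc)

lemma run_le: "u \<noteq> [] \<Longrightarrow> 1 \<le> j \<Longrightarrow>
   lzs (p @ pw u j) (pw u i @ s) \<le> RL j i + lzs (p @ pw u (j + i)) s"
proof (induction j i rule: RL.induct)
  case (1 j i)
  show ?case
  proof (cases "i = 0")
    case True thus ?thesis by (simp add: RL.simps)
  next
    case False
    show ?thesis
    proof (cases "i \<le> j")
      case True
      have "pw u j = pw u i @ pw u (j - i)" using True pw_add[of u i "j - i"] by simp
      hence "p @ pw u j = p @ pw u i @ pw u (j - i)" by simp
      hence "sublist (pw u i) (p @ pw u j)" unfolding sublist_def by blast
      moreover have "pw u i \<noteq> []" using pw_ne[of u i] 1(2) False by (simp add: Suc_le_eq)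
      ultimately have "lzs (p @ pw u j) (pw u i @ s) \<le> Suc (lzs ((p @ pw u j) @ pw u i) s)"
        using lzs_step_le by blast
      thus ?thesis using True False 1(3) by (simp add: RL.simps pw_add[symmetric] add.commute)
    next
      case ni: False
      have ps: "pw u i = pw u j @ pw u (i - j)" using ni pw_add[of u j "i - j"] by simp
      have "sublist (pw u j) (p @ pw u j)" unfolding sublist_def
        by (intro exI[of _ p] exI[of _ "[]"]) simp
      moreover have "pw u j \<noteq> []" using pw_ne 1(2,3) by simp
      ultimately have "lzs (p @ pw u j) (pw u j @ (pw u (i - j) @ s))
          \<le> Suc (lzs ((p @ pw u j) @ pw u j) (pw u (i - j) @ s))"
        using lzs_step_le by blast
      moreover have "(p @ pw u j) @ pw u j = p @ pw u (2 * j)" by (simp add: pw_add[symmetric] mult_2)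
      moreover have "lzs (p @ pw u (2 * j)) (pw u (i - j) @ s) \<le> RL (2 * j) (i - j) + lzs (p @ pw u (2 * j + (i - j))) s"
        using 1(1) False ni 1(2,3) by simp
      moreover have "2 * j + (i - j) = j + i" using ni by simp
      ultimately show ?thesis using ps False ni 1(3) by (simp add: RL.simps)
    qed
  qed
qed

lemma run_le_lit: "lzs p (replicate k c @ s) \<le> (if k = 0 then 0 else Suc (RL 1 (k - 1))) + lzs (p @ replicate k c) s"
proof (cases k)
  case 0 thus ?thesis by simp
next
  case (Suc k')
  have "lzs p ([c] @ (replicate k' c @ s)) \<le> Suc (lzs (p @ [c]) (replicate k' c @ s))"
    by (rule lzs_step_le) auto
  moreover have "lzs (p @ pw [c] 1) (pw [c] k' @ s) \<le> RL 1 k' + lzs (p @ pw [c] (1 + k')) s"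
    by (rule run_le) auto
  ultimately show ?thesis using Suc by (simp add: pw_single replicate_append_same)
qed

lemma RL1_bound: "2 ^ RL 1 i \<le> 2 * (i + 1)"
  using RL_bound[of 1 i] by simp

lemma ed_refl: "ed xs xs = 0"
  by (induction xs) auto

lemma ed_app_same_le: "ed (u @ xs) (u @ ys) \<le> ed xs ys"
  by (induction u) auto

lemma ed_sub1: "ed (x # r) (y # r) \<le> 1"
  by (simp add: ed_refl)

lemma ed_del1: "ed (x # r) r \<le> 1"
  by (cases r) (auto simp: ed_refl)

lemma ed_ins1: "ed r (x # r) \<le> 1"
  by (cases r) (auto simp: ed_refl)

lemma ed_zero: "ed xs ys = 0 \<Longrightarrow> xs = ys"
proof (induction xs ys rule: ed.induct)
  case (1 ys) thus ?case by simp
next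
  case (2 x xs) thus ?case by simp
next
  case (3 x xs y ys)
  thus ?case by (auto simp: min_def split: if_splits)
qed

lemma ed_one: "ed xs ys \<le> 1 \<Longrightarrow> xs \<noteq> ys \<Longrightarrow> ed xs ys = 1"
proof -
  assume "ed xs ys \<le> 1" "xs \<noteq> ys"
  moreover have "ed xs ys \<noteq> 0" using ed_zero \<open>xs \<noteq> ys\<close> by blast
  ultimately show ?thesis by linarith
qed

lemma app_split: "A @ z # B = X @ Z \<Longrightarrow>
   (\<exists>B'. X = A @ z # B' \<and> B = B' @ Z) \<or> (\<exists>A'. A = X @ A' \<and> Z = A' @ z # B)"
  by (auto simp: append_eq_append_conv2 Cons_eq_append_conv)

lemma concat_split: "A @ z # B = concat xss \<Longrightarrow>
  \<exists>xs1 x xs2 u v. xss = xs1 @ x # xs2 \<and> x = u @ z # v \<and> A = concat xs1 @ u \<and> B = v @ concat xs2"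
proof (induction xss arbitrary: A)
  case Nil thus ?case by simp
next
  case (Cons y yss)
  from Cons.prems have "A @ z # B = y @ concat yss" by simp
  from app_split[OF this] show ?case
  proof
    assume "\<exists>B'. y = A @ z # B' \<and> B = B' @ concat yss"
    then obtain B' where "y = A @ z # B'" "B = B' @ concat yss" by blast
    thus ?thesis by (intro exI[of _ "[]"] exI[of _ y] exI[of _ yss] exI[of _ A] exI[of _ B']) auto
  next
    assume "\<exists>A'. A = y @ A' \<and> concat yss = A' @ z # B"
    then obtain A' where A': "A = y @ A'" "A' @ z # B = concat yss" by auto
    from Cons.IH[OF A'(2)] obtain xs1 x xs2 u v where
      "yss = xs1 @ x # xs2" "x = u @ z # v" "A' = concat xs1 @ u" "B = v @ concat xs2" by blast
    thus ?thesis using A' by (intro exI[of _ "y # xs1"] exI[of _ x] exI[of _ xs2] exI[of _ u] exI[of _ v]) auto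
  qed
qed

lemma map_upt_split: "map f [a..<b] = xs1 @ x # xs2 \<Longrightarrow>
  \<exists>l. a \<le> l \<and> l < b \<and> xs1 = map f [a..<l] \<and> x = f l \<and> xs2 = map f [Suc l..<b]"
proof (induction xs1 arbitrary: a)
  case Nil
  hence "a < b" by (cases "a < b") auto
  moreover hence "[a..<b] = a # [Suc a..<b]" by (simp add: upt_conv_Cons)
  ultimately show ?case using Nil by (intro exI[of _ a]) auto
next
  case (Cons y xs1')
  hence ab: "a < b" by (cases "a < b") auto
  hence e: "[a..<b] = a # [Suc a..<b]" by (simp add: upt_conv_Cons)
  hence "map f [Suc a..<b] = xs1' @ x # xs2" using Cons.prems by simp
  from Cons.IH[OF this] obtain l where l: "Suc a \<le> l" "l < b" "xs1' = map f [Suc a..<l]" "x = f l"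
     "xs2 = map f [Suc l..<b]" by blast
  have "y = f a" using Cons.prems e by simp
  moreover have "[a..<l] = a # [Suc a..<l]" using l(1) by (simp add: upt_conv_Cons)
  ultimately show ?case using l by (intro exI[of _ l]) auto
qed

lemma suffix_rep_last: "suffix (replicate i c) (X @ replicate l c) \<Longrightarrow> l < i \<Longrightarrow> X \<noteq> [] \<and> last X = c"
proof -
  assume s: "suffix (replicate i c) (X @ replicate l c)" and li: "l < i"
  then obtain zs where zs: "X @ replicate l c = zs @ replicate i c" by (auto simp: suffix_def)
  have "i = (i - Suc l) + Suc l" using li by simp
  hence "replicate i c = replicate (i - Suc l) c @ replicate (Suc l) c" by (metis replicate_add)
  hence "replicate i c = replicate (i - Suc l) c @ [c] @ replicate l c" by simp
  hence "X @ replicate l c = (zs @ replicate (i - Suc l) c @ [c]) @ replicate l c" using zs by simp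
  hence "X = zs @ replicate (i - Suc l) c @ [c]" by simp
  thus ?thesis by simp
qed

lemma suffix_last: "suffix s t \<Longrightarrow> s \<noteq> [] \<Longrightarrow> t \<noteq> [] \<and> last t = last s"
  by (auto simp: suffix_def)


definition word :: "nat list \<Rightarrow> (nat \<Rightarrow> nat) \<Rightarrow> nat \<Rightarrow> nat list" where
  "word Y q i = replicate i 0 @ 1 # take (q i) Y"
definition W :: "nat list \<Rightarrow> (nat \<Rightarrow> nat) \<Rightarrow> nat \<Rightarrow> nat list" where
  "W Y q k = concat (map (word Y q) [1..<Suc k])"
definition Wr :: "nat list \<Rightarrow> (nat \<Rightarrow> nat) \<Rightarrow> nat \<Rightarrow> nat \<Rightarrow> nat list" where
  "Wr Y q k m = concat (map (word Y q) [Suc k..<Suc m])"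
definition DD :: "nat \<Rightarrow> nat list \<Rightarrow> nat list \<Rightarrow> nat list" where
  "DD K X Y = replicate K 0 @ X @ Y @ [4]"

lemma W_0[simp]: "W Y q 0 = []" by (simp add: W_def)
lemma W_Suc: "W Y q (Suc k) = W Y q k @ word Y q (Suc k)" by (simp add: W_def)
lemma Wr_same[simp]: "Wr Y q m m = []" by (simp add: Wr_def)
lemma Wr_Cons: assumes "k < m" shows "Wr Y q k m = word Y q (Suc k) @ Wr Y q (Suc k) m"
proof -
  have "[Suc k..<Suc m] = Suc k # [Suc (Suc k)..<Suc m]" using assms by (subst upt_conv_Cons) auto
  thus ?thesis by (simp add: Wr_def del: upt_Suc)
qed
lemma W_Wr: "k \<le> m \<Longrightarrow> W Y q m = W Y q k @ Wr Y q k m"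
proof (induction m)
  case 0 thus ?case by (simp add: Wr_def)
next
  case (Suc m)
  show ?case
  proof (cases "k = Suc m")
    case True thus ?thesis by simp
  next
    case False
    hence "k \<le> m" using Suc by simp
    have "Wr Y q k (Suc m) = Wr Y q k m @ word Y q (Suc m)"
      using \<open>k \<le> m\<close> by (simp add: Wr_def)
    thus ?thesis using Suc.IH[OF \<open>k \<le> m\<close>] by (simp add: W_Suc)
  qed
qed
lemma W_Wr0: "W Y q m = Wr Y q 0 m" by (simp add: W_def Wr_def)

lemma word_ne: "word Y q i \<noteq> []" by (simp add: word_def)
lemma Wr_hd: "Wr Y q k m = [] \<or> hd (Wr Y q k m) = 0"
proof (cases "k < m")
  case True thus ?thesis by (simp add: Wr_Cons word_def)
next
  case False thus ?thesis by (simp add: Wr_def)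
qed

lemma W_last: "0 \<notin> set Y \<Longrightarrow> W Y q k = [] \<or> last (W Y q k) \<noteq> 0"
proof (induction k)
  case 0 thus ?case by simp
next
  case (Suc k)
  have "last (word Y q (Suc k)) \<noteq> 0"
  proof (cases "take (q (Suc k)) Y = []")
    case True thus ?thesis by (simp add: word_def)
  next
    case False
    hence "last (take (q (Suc k)) Y) \<in> set Y" by (meson last_in_set in_set_takeD)
    hence "last (take (q (Suc k)) Y) \<noteq> 0" using Suc.prems by metis
    thus ?thesis using False by (simp add: word_def)
  qed
  thus ?case by (simp add: W_Suc word_ne)
qed

lemma W_split1: assumes Y: "1 \<notin> set Y" and h: "A @ 1 # B = W Y q k"
  shows "\<exists>l. 1 \<le> l \<and> l \<le> k \<and> A = W Y q (l - 1) @ replicate l 0 \<and> B = take (q l) Y @ Wr Y q l k"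
proof -
  from concat_split[OF h[unfolded W_def]] obtain xs1 x xs2 u v where
    s: "map (word Y q) [1..<Suc k] = xs1 @ x # xs2" "x = u @ 1 # v" "A = concat xs1 @ u" "B = v @ concat xs2"
    by blast
  from map_upt_split[OF s(1)] obtain l where l: "1 \<le> l" "l < Suc k" "xs1 = map (word Y q) [1..<l]"
    "x = word Y q l" "xs2 = map (word Y q) [Suc l..<Suc k]" by blast
  have "replicate l 0 @ 1 # take (q l) Y = u @ 1 # v" using s(2) l(4) by (simp add: word_def)
  moreover have "1 \<notin> set (take (q l) Y)" using Y by (meson in_set_takeD)
  ultimately have uv: "u = replicate l 0" "v = take (q l) Y"
    by (auto simp: append_Cons_eq_iff)
  have "concat xs1 = W Y q (l - 1)" using l(1,3) by (simp add: W_def)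
  moreover have "concat xs2 = Wr Y q l k" using l(5) by (simp add: Wr_def)
  ultimately show ?thesis using l s uv by auto
qed

lemma rep_split0: assumes "replicate l (0::nat) @ R = u @ 0 # v" "0 \<notin> set R"
  shows "\<exists>t<l. u = replicate t 0"
proof (cases "length u < l")
  case True
  have "take (length u) (replicate l 0 @ R) = u" using assms(1) by simp
  hence "u = replicate (length u) 0" using True by simp
  thus ?thesis using True by blast
next
  case False
  hence "drop l (u @ 0 # v) = drop l u @ 0 # v" by simp
  moreover have "drop l (replicate l 0 @ R) = R" by simp
  ultimately have "0 \<in> set R" using assms(1) by (metis in_set_conv_decomp)
  thus ?thesis using assms(2) by simp
qed

lemma W_split0: assumes Y: "0 \<notin> set Y" and h: "A @ 0 # B = W Y q k"
  shows "\<exists>l t. 1 \<le> l \<and> l \<le> k \<and> t < l \<and> A = W Y q (l - 1) @ replicate t 0"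
proof -
  from concat_split[OF h[unfolded W_def]] obtain xs1 x xs2 u v where
    s: "map (word Y q) [1..<Suc k] = xs1 @ x # xs2" "x = u @ 0 # v" "A = concat xs1 @ u" "B = v @ concat xs2"
    by blast
  from map_upt_split[OF s(1)] obtain l where l: "1 \<le> l" "l < Suc k" "xs1 = map (word Y q) [1..<l]"
    "x = word Y q l" "xs2 = map (word Y q) [Suc l..<Suc k]" by blast
  have "replicate l 0 @ (1 # take (q l) Y) = u @ 0 # v" using s(2) l(4) by (simp add: word_def)
  moreover have "0 \<notin> set (1 # take (q l) Y)" using Y by (auto dest: in_set_takeD)
  ultimately obtain t where "t < l" "u = replicate t 0" using rep_split0 by blast
  moreover have "concat xs1 = W Y q (l - 1)" using l(1,3) by (simp add: W_def)
  ultimately show ?thesis using l s by (intro exI[of _ l] exI[of _ t]) auto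
qed


lemma DD_no1: "1 \<notin> set X \<Longrightarrow> 1 \<notin> set Y \<Longrightarrow> 1 \<notin> set (DD K X Y)"
  by (auto simp: DD_def)

lemma DD_split1: assumes X: "X = [1] \<or> X = [5, 1]" and Y: "1 \<notin> set Y" and h: "A @ 1 # B = DD K X Y"
  shows "B = Y @ [4] \<and> A = replicate K 0 @ butlast X"
proof -
  have "DD K X Y = (replicate K 0 @ butlast X) @ 1 # (Y @ [4])" using X by (auto simp: DD_def)
  hence e: "(replicate K 0 @ butlast X) @ 1 # (Y @ [4]) = A @ 1 # B" using h by simp
  have n1: "1 \<notin> set (replicate K 0 @ butlast X)" using X by auto
  have n2: "1 \<notin> set (Y @ [4])" using Y by auto
  show ?thesis using iffD1[OF append_Cons_eq_iff[OF n1 n2, of A B] e] by simp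
qed

lemma DD_last: "DD K X Y \<noteq> [] \<and> last (DD K X Y) = 4" by (simp add: DD_def)

lemma N1: assumes Y: "0 \<notin> set Y" "1 \<notin> set Y" and X: "X = [] \<or> X = [5] \<or> X = [5, 1]"
  and ki: "k < i"
  shows "\<not> sublist (replicate i 0 @ [1]) (DD K X Y @ W Y q k)"
proof
  assume "sublist (replicate i 0 @ [1]) (DD K X Y @ W Y q k)"
  then obtain A B where h: "DD K X Y @ W Y q k = A @ (replicate i 0 @ [1]) @ B"
    by (auto simp: sublist_def)
  hence h': "(A @ replicate i 0) @ 1 # B = DD K X Y @ W Y q k" by simp
  from app_split[OF h'] show False
  proof
    assume "\<exists>B'. DD K X Y = (A @ replicate i 0) @ 1 # B' \<and> B = B' @ W Y q k"
    then obtain B' where b: "(A @ replicate i 0) @ 1 # B' = DD K X Y" by auto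
    show False
    proof (cases "X = [5, 1]")
      case True
      from DD_split1[OF _ Y(2) b] True have "A @ replicate i 0 = replicate K 0 @ [5]" by simp
      moreover have "i \<noteq> 0" using ki by simp
      moreover have "last (A @ replicate i 0) = 0" using \<open>i \<noteq> 0\<close> by (simp add: last_append)
      ultimately show False by simp
    next
      case False
      hence "1 \<notin> set (DD K X Y)" using X Y DD_no1 by auto
      thus False using b by (metis in_set_conv_decomp)
    qed
  next
    assume "\<exists>A'. A @ replicate i 0 = DD K X Y @ A' \<and> W Y q k = A' @ 1 # B"
    then obtain A' where a: "A @ replicate i 0 = DD K X Y @ A'" "A' @ 1 # B = W Y q k" by auto
    from W_split1[OF Y(2) a(2)] obtain l where l: "1 \<le> l" "l \<le> k" "A' = W Y q (l - 1) @ replicate l 0"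
      by blast
    have "suffix (replicate i 0) ((DD K X Y @ W Y q (l - 1)) @ replicate l 0)"
      using a(1) l(3) by (metis append.assoc suffix_def)
    from suffix_rep_last[OF this] have "last (DD K X Y @ W Y q (l - 1)) = 0" using l ki by simp
    moreover have "last (DD K X Y @ W Y q (l - 1)) \<noteq> 0"
      using W_last[OF Y(1), of q "l - 1"] DD_last[of K X Y] by (auto simp: last_append)
    ultimately show False by simp
  qed
qed

lemma N2: assumes Y: "0 \<notin> set Y" "1 \<notin> set Y"
  and X: "X = [] \<or> X = [5] \<or> X = [1] \<or> X = [5, 1]"
  and hs: "take (Suc (q k)) s = take (Suc (q k)) Y" "q k < length Y"
  and mono: "\<And>l. l \<le> k \<Longrightarrow> q l \<le> q k"
  and hx: "1 \<in> set X \<Longrightarrow> \<forall>rest. \<not> prefix s (Y @ 4 # rest)"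
  shows "\<not> sublist (1 # s) (DD K X Y @ W Y q k @ replicate j 0)"
proof
  assume "sublist (1 # s) (DD K X Y @ W Y q k @ replicate j 0)"
  then obtain A B0 where h: "DD K X Y @ (W Y q k @ replicate j 0) = A @ 1 # (s @ B0)"
    by (auto simp: sublist_def)
  have lens: "Suc (q k) \<le> length s"
  proof -
    have "length (take (Suc (q k)) s) = Suc (q k)" using hs by simp
    thus ?thesis by simp
  qed
  from app_split[OF h[symmetric]] show False
  proof
    assume "\<exists>B'. DD K X Y = A @ 1 # B' \<and> s @ B0 = B' @ W Y q k @ replicate j 0"
    then obtain B' where b: "A @ 1 # B' = DD K X Y" "s @ B0 = B' @ W Y q k @ replicate j 0" by auto
    have X1: "X = [1] \<or> X = [5, 1]"
    proof (rule ccontr)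
      assume "\<not> (X = [1] \<or> X = [5, 1])"
      hence "1 \<notin> set (DD K X Y)" using X Y DD_no1 by auto
      thus False using b(1) by (metis in_set_conv_decomp)
    qed
    from DD_split1[OF X1 Y(2) b(1)] have "B' = Y @ [4]" by simp
    hence "prefix s (Y @ 4 # (W Y q k @ replicate j 0 @ B0))" using b(2)
      by (metis append.assoc append_Cons append_Nil prefix_def)
    thus False using hx X1 by auto
  next
    assume "\<exists>A'. A = DD K X Y @ A' \<and> W Y q k @ replicate j 0 = A' @ 1 # s @ B0"
    then obtain A' where a: "A' @ 1 # (s @ B0) = W Y q k @ replicate j 0" by auto
    from app_split[OF a] show False
    proof
      assume "\<exists>B'. W Y q k = A' @ 1 # B' \<and> s @ B0 = B' @ replicate j 0"
      then obtain B' where b: "A' @ 1 # B' = W Y q k" "s @ B0 = B' @ replicate j 0" by auto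
      from W_split1[OF Y(2) b(1)] obtain l where l: "1 \<le> l" "l \<le> k" "B' = take (q l) Y @ Wr Y q l k"
        by blast
      define R where "R = Wr Y q l k @ replicate j 0"
      have sb: "s @ B0 = take (q l) Y @ R" using b(2) l(3) by (simp add: R_def)
      have qlk: "q l \<le> q k" using mono l(2) by simp
      have ltY: "length (take (q l) Y) = q l" using qlk hs(2) by simp
      have R_ne: "R \<noteq> []"
      proof
        assume "R = []"
        hence "length (s @ B0) = q l" using sb ltY by simp
        thus False using lens qlk by simp
      qed
      have R_hd: "hd R = 0"
      proof (cases "Wr Y q l k = []")
        case True thus ?thesis using R_ne by (simp add: R_def)
      next
        case False thus ?thesis using Wr_hd[of Y q l k] by (simp add: R_def)
      qed
      have "(s @ B0) ! (q l) = R ! 0" using sb ltY by (simp add: nth_append)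
      also have "\<dots> = 0" using R_ne R_hd by (simp add: hd_conv_nth)
      finally have s0: "s ! (q l) = 0" using lens qlk by (simp add: nth_append)
      have "s ! (q l) = take (Suc (q k)) s ! (q l)" using qlk by simp
      also have "\<dots> = take (Suc (q k)) Y ! (q l)" using hs(1) by simp
      also have "\<dots> = Y ! (q l)" using qlk by simp
      finally have "Y ! (q l) = 0" using s0 by simp
      moreover have "Y ! (q l) \<in> set Y" using qlk hs(2) by simp
      ultimately show False using Y(1) by simp
    next
      assume "\<exists>A''. A' = W Y q k @ A'' \<and> replicate j 0 = A'' @ 1 # s @ B0"
      then obtain A'' where "replicate j (0::nat) = A'' @ 1 # s @ B0" by auto
      hence "1 \<in> set (replicate j (0::nat))" by simp
      thus False by simp
    qed
  qed
qed


definition U3 :: "nat \<Rightarrow> nat list" where "U3 r = replicate r 2 @ [3]"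
definition Y3 :: "nat \<Rightarrow> nat list" where "Y3 r = pw (U3 r) r"
definition q3 :: "nat \<Rightarrow> nat \<Rightarrow> nat" where "q3 r i = i * (r + 2)"

lemma Y3_set: "set (Y3 r) \<subseteq> {2, 3}"
proof -
  have "\<And>k. set (pw (U3 r) k) \<subseteq> {2, 3}"
  proof -
    fix k show "set (pw (U3 r) k) \<subseteq> {2, 3}" by (induction k) (auto simp: pw_Suc U3_def)
  qed
  thus ?thesis by (simp add: Y3_def)
qed

lemma Y3_length: "length (Y3 r) = r * (r + 1)"
  by (simp add: Y3_def pw_length U3_def)

lemma Y3_take: assumes "l < r" shows "take (q3 r l) (Y3 r) = pw (U3 r) l @ replicate l 2"
proof -
  have "Y3 r = pw (U3 r) l @ pw (U3 r) (r - l)" using assms pw_add[of "U3 r" l "r - l"] by (simp add: Y3_def)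
  moreover have "pw (U3 r) (r - l) = replicate r 2 @ 3 # pw (U3 r) (r - l - 1)"
    using assms by (cases "r - l") (auto simp: pw_Suc U3_def)
  moreover have "length (pw (U3 r) l) = l * (r + 1)" by (simp add: pw_length U3_def)
  moreover have "q3 r l = l * (r + 1) + l" by (simp add: q3_def)
  moreover have "take l (replicate r 2 @ 3 # pw (U3 r) (r - l - 1)) = replicate l (2::nat)"
    using assms by simp
  ultimately show ?thesis by simp
qed

lemma Y3_take_end: assumes "1 \<le> l" "l < r"
  shows "take (q3 r l) (Y3 r) = pw (U3 r) (l - 1) @ replicate r 2 @ 3 # replicate l 2"
proof -
  have "pw (U3 r) l = pw (U3 r) (l - 1) @ U3 r" using assms pw_add[of "U3 r" "l - 1" 1] by (simp add: pw_Suc)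
  thus ?thesis using Y3_take[OF assms(2)] by (simp add: U3_def pw_Suc)
qed

lemma Y3_delta: assumes "1 \<le> i" "i < r"
  shows "take (q3 r i) (Y3 r) = take (q3 r (i - 1)) (Y3 r) @ replicate (r + 1 - i) 2 @ 3 # replicate i 2"
proof -
  have "take (q3 r (i - 1)) (Y3 r) = pw (U3 r) (i - 1) @ replicate (i - 1) 2" using Y3_take assms by simp
  moreover have "replicate r (2::nat) = replicate (i - 1) 2 @ replicate (r + 1 - i) 2"
    using assms by (simp add: replicate_add[symmetric])
  ultimately show ?thesis using Y3_take_end[OF assms] by simp
qed

lemma q3_mono: "l \<le> k \<Longrightarrow> q3 r l \<le> q3 r k" unfolding q3_def by (rule mult_le_mono1)

lemma suffix_3_rep: assumes "Z @ 3 # replicate l (2::nat) = A0 @ 3 # replicate i 2" "l < i"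
  shows False
proof -
  have "rev (Z @ 3 # replicate l (2::nat)) ! l = rev (A0 @ 3 # replicate i 2) ! l" using assms(1) by simp
  moreover have "rev (Z @ 3 # replicate l (2::nat)) ! l = 3" by (simp add: nth_append)
  moreover have "rev (A0 @ 3 # replicate i (2::nat)) ! l = 2" using assms(2) by (simp add: nth_append)
  ultimately show False by simp
qed

lemma N3: assumes X: "X = [] \<or> X = [5]" and i: "1 \<le> i" "i < r"
  shows "\<not> sublist (3 # replicate i 2 @ [0]) (DD K X (Y3 r) @ W (Y3 r) (q3 r) i)"
proof
  have Y0: "0 \<notin> set (Y3 r)" using Y3_set[of r] by fastforce
  assume "sublist (3 # replicate i 2 @ [0]) (DD K X (Y3 r) @ W (Y3 r) (q3 r) i)"
  then obtain A0 B where h: "DD K X (Y3 r) @ W (Y3 r) (q3 r) i = (A0 @ 3 # replicate i 2) @ 0 # B"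
    by (auto simp: sublist_def)
  define A where "A = A0 @ 3 # replicate i 2"
  have lastA: "A \<noteq> [] \<and> last A = 2" using i by (simp add: A_def last_append)
  from app_split[OF h[symmetric, folded A_def]] show False
  proof
    assume "\<exists>B'. DD K X (Y3 r) = A @ 0 # B' \<and> B = B' @ W (Y3 r) (q3 r) i"
    then obtain B' where b: "replicate K 0 @ (X @ Y3 r @ [4]) = A @ 0 # B'" by (auto simp: DD_def)
    have "0 \<notin> set (X @ Y3 r @ [4])" using X Y0 by auto
    from rep_split0[OF b this] obtain t where "A = replicate t 0" by blast
    moreover have "t \<noteq> 0" using lastA \<open>A = replicate t 0\<close> by auto
    ultimately have "last A = 0" by (simp add: last_replicate)
    thus False using lastA by simp
  next
    assume "\<exists>A'. A = DD K X (Y3 r) @ A' \<and> W (Y3 r) (q3 r) i = A' @ 0 # B"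
    then obtain A' where a: "A = DD K X (Y3 r) @ A'" "A' @ 0 # B = W (Y3 r) (q3 r) i" by auto
    from W_split0[OF Y0 a(2)] obtain l t where lt: "1 \<le> l" "l \<le> i" "t < l"
      "A' = W (Y3 r) (q3 r) (l - 1) @ replicate t 0" by blast
    show False
    proof (cases "t = 0")
      case False
      hence "last A = 0" using a(1) lt(4) by (simp add: last_append)
      thus False using lastA by simp
    next
      case True
      show False
      proof (cases "l = 1")
        case True
        hence "A = DD K X (Y3 r)" using a(1) lt(4) \<open>t = 0\<close> by simp
        thus False using lastA DD_last[of K X "Y3 r"] by simp
      next
        case False
        define l' where "l' = l - 1"
        have l': "1 \<le> l'" "l' < i" "l' < r" using lt False i by (auto simp: l'_def)
        have sl: "Suc (l' - 1) = l'" using l'(1) by simp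
        have "W (Y3 r) (q3 r) l' = W (Y3 r) (q3 r) (l' - 1) @ word (Y3 r) (q3 r) l'"
          using W_Suc[of "Y3 r" "q3 r" "l' - 1"] unfolding sl .
        hence "W (Y3 r) (q3 r) (l - 1) = W (Y3 r) (q3 r) (l' - 1) @ word (Y3 r) (q3 r) l'"
          by (simp add: l'_def)
        hence "A = (DD K X (Y3 r) @ W (Y3 r) (q3 r) (l' - 1) @ replicate l' 0 @ 1 #
                 pw (U3 r) (l' - 1) @ replicate r 2) @ 3 # replicate l' 2"
          using a(1) lt(4) \<open>t = 0\<close> Y3_take_end[OF l'(1,3)] by (simp add: word_def)
        thus False using A_def suffix_3_rep l'(2) by metis
      qed
    qed
  qed
qed


lemma sum_LB:
  assumes "\<And>i. 1 \<le> i \<Longrightarrow> i \<le> m \<Longrightarrow>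
     c + lzs (P @ W Y q i) (Wr Y q i m) \<le> lzs (P @ W Y q (i - 1)) (Wr Y q (i - 1) m)"
  shows "c * m \<le> lzs P (W Y q m)"
proof -
  have "\<forall>k. k + d = m \<longrightarrow> c * d \<le> lzs (P @ W Y q k) (Wr Y q k m)" for d
  proof (induction d)
    case 0 thus ?case by simp
  next
    case (Suc d)
    show ?case
    proof (intro allI impI)
      fix k assume k: "k + Suc d = m"
      have "c + lzs (P @ W Y q (Suc k)) (Wr Y q (Suc k) m) \<le> lzs (P @ W Y q k) (Wr Y q k m)"
        using assms[of "Suc k"] k by simp
      moreover have "c * d \<le> lzs (P @ W Y q (Suc k)) (Wr Y q (Suc k) m)"
        using Suc.IH k by simp
      ultimately show "c * Suc d \<le> lzs (P @ W Y q k) (Wr Y q k m)" by simp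
    qed
  qed
  from this[of m] have "c * m \<le> lzs (P @ W Y q 0) (Wr Y q 0 m)" by simp
  thus ?thesis by (simp add: W_Wr0)
qed

lemma sum_UB:
  assumes "\<And>i. 1 \<le> i \<Longrightarrow> i \<le> m \<Longrightarrow>
     lzs (P @ W Y q (i - 1)) (Wr Y q (i - 1) m) \<le> 1 + lzs (P @ W Y q i) (Wr Y q i m)"
  shows "lzs P (W Y q m) \<le> m"
proof -
  have "\<forall>k. k + d = m \<longrightarrow> lzs (P @ W Y q k) (Wr Y q k m) \<le> d" for d
  proof (induction d)
    case 0 thus ?case by simp
  next
    case (Suc d)
    show ?case
    proof (intro allI impI)
      fix k assume k: "k + Suc d = m"
      have "lzs (P @ W Y q k) (Wr Y q k m) \<le> 1 + lzs (P @ W Y q (Suc k)) (Wr Y q (Suc k) m)"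
        using assms[of "Suc k"] k by simp
      moreover have "lzs (P @ W Y q (Suc k)) (Wr Y q (Suc k) m) \<le> d"
        using Suc.IH k by simp
      ultimately show "lzs (P @ W Y q k) (Wr Y q k m) \<le> Suc d" by simp
    qed
  qed
  from this[of m] have "lzs (P @ W Y q 0) (Wr Y q 0 m) \<le> m" by simp
  thus ?thesis by (simp add: W_Wr0)
qed

lemma Wr_prev: "1 \<le> i \<Longrightarrow> i \<le> m \<Longrightarrow> Wr Y q (i - 1) m = word Y q i @ Wr Y q i m"
  using Wr_Cons[of "i - 1" m Y q] by simp

lemma W_prev: "1 \<le> i \<Longrightarrow> W Y q i = W Y q (i - 1) @ word Y q i"
  using W_Suc[of Y q "i - 1"] by simp

lemma notpref: fixes Y :: "nat list" assumes "k \<le> length Y" "0 \<notin> set Y"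
  shows "\<not> prefix (take k Y @ [0]) (Y @ 4 # rest)"
proof
  assume "prefix (take k Y @ [0]) (Y @ 4 # rest)"
  then obtain z where z: "Y @ 4 # rest = take k Y @ [0] @ z" by (auto simp: prefix_def)
  have "(Y @ 4 # rest) ! k = 0" using z assms by (simp add: nth_append)
  moreover have "(Y @ 4 # rest) ! k \<noteq> 0"
  proof (cases "k < length Y")
    case True
    hence "(Y @ 4 # rest) ! k = Y ! k" by (simp add: nth_append)
    moreover have "Y ! k \<in> set Y" using True by simp
    ultimately show ?thesis using assms(2) by metis
  next
    case False
    hence "k = length Y" using assms(1) by simp
    thus ?thesis by (simp add: nth_append)
  qed
  ultimately show False by simp
qed

lemma LB_word1:
  assumes Y: "0 \<notin> set Y" "1 \<notin> set Y" and q: "mono q" "q i \<le> length Y" "q (i - 1) < q i"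
    and i: "1 \<le> i" and rest: "rest = [] \<or> hd rest = 0"
  shows "1 + lzs (DD K [1] Y @ W Y q i) rest \<le> lzs (DD K [1] Y @ W Y q (i - 1)) (word Y q i @ rest)"
proof -
  define s where "s = take (q i) Y @ [0]"
  have ts: "take (Suc (q (i - 1))) s = take (Suc (q (i - 1))) Y"
    using q(2,3) by (simp add: s_def take_append min_def)
  have ns: "\<not> sublist (1 # s) (DD K [1] Y @ W Y q (i - 1) @ replicate 0 0)"
  proof (rule N2[OF Y])
    show "take (Suc (q (i - 1))) s = take (Suc (q (i - 1))) Y" by (rule ts)
    show "q (i - 1) < length Y" using q by simp
    show "\<And>l. l \<le> i - 1 \<Longrightarrow> q l \<le> q (i - 1)" using q(1) by (simp add: monoD)
    show "1 \<in> set [1] \<Longrightarrow> \<forall>rest. \<not> prefix s (Y @ 4 # rest)"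
      using notpref[OF q(2) Y(1)] by (simp add: s_def)
  qed simp
  have nw: "rest = [] \<or> \<not> sublist (word Y q i @ [hd rest]) (DD K [1] Y @ W Y q (i - 1))"
  proof (cases "rest = []")
    case False
    hence hr: "hd rest = 0" using rest by simp
    have "word Y q i @ [0] = replicate i 0 @ (1 # s)" by (simp add: word_def s_def)
    hence "sublist (word Y q i @ [0]) (DD K [1] Y @ W Y q (i - 1)) \<Longrightarrow>
           sublist (1 # s) (DD K [1] Y @ W Y q (i - 1) @ replicate 0 0)"
      by (metis append_Nil2 replicate_0 sublist_append_leftI sublist_order.order_trans
          sublist_order.order_refl)
    thus ?thesis using ns hr by auto
  qed simp
  have "Suc (lzs ((DD K [1] Y @ W Y q (i - 1)) @ word Y q i) rest)
        \<le> lzs (DD K [1] Y @ W Y q (i - 1)) (word Y q i @ rest)"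
    by (rule lzs_step_ge[OF word_ne nw])
  thus ?thesis using W_prev[OF i, of Y q] by simp
qed

lemma sub_app_r: "sublist a b \<Longrightarrow> sublist a (b @ c)"
  by (meson sublist_append_rightI sublist_order.order_trans)

lemma sub_app_l: "sublist a b \<Longrightarrow> sublist a (c @ b)"
  by (meson sublist_append_leftI sublist_order.order_trans)

lemma LB_word2:
  assumes Y: "0 \<notin> set Y" "1 \<notin> set Y" and q: "mono q" "q i \<le> length Y" "q (i - 1) < q i"
    and i: "1 \<le> i" and rest: "rest = [] \<or> hd rest = 0"
    and X: "X = [] \<or> X = [5] \<or> X = [5, 1]"
  shows "2 + lzs (DD K X Y @ W Y q i) rest \<le> lzs (DD K X Y @ W Y q (i - 1)) (word Y q i @ rest)"
proof -
  define P0 where "P0 = DD K X Y @ W Y q (i - 1)"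
  define s where "s = take (q i) Y @ [0]"
  have ts: "take (Suc (q (i - 1))) s = take (Suc (q (i - 1))) Y"
    using q(2,3) by (simp add: s_def take_append min_def)
  have ns: "\<not> sublist (1 # s) (DD K X Y @ W Y q (i - 1) @ replicate i 0)"
  proof (rule N2[OF Y])
    show "take (Suc (q (i - 1))) s = take (Suc (q (i - 1))) Y" by (rule ts)
    show "q (i - 1) < length Y" using q by simp
    show "\<And>l. l \<le> i - 1 \<Longrightarrow> q l \<le> q (i - 1)" using q(1) by (simp add: monoD)
    show "1 \<in> set X \<Longrightarrow> \<forall>rest. \<not> prefix s (Y @ 4 # rest)"
      using notpref[OF q(2) Y(1)] by (simp add: s_def)
  qed (use X in auto)
  have n1: "\<not> sublist (replicate i 0 @ [1]) P0"
    unfolding P0_def using N1[OF Y X, of "i - 1" i] i by simp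
  have step1: "Suc (lzs (P0 @ replicate i 0) ((1 # take (q i) Y) @ rest))
      \<le> lzs P0 (replicate i 0 @ (1 # take (q i) Y) @ rest)"
    by (rule lzs_step_ge) (use i n1 in auto)
  have nw: "rest = [] \<or> \<not> sublist ((1 # take (q i) Y) @ [hd rest]) (P0 @ replicate i 0)"
  proof (cases "rest = []")
    case False
    hence "hd rest = 0" using rest by simp
    thus ?thesis using ns by (simp add: s_def P0_def)
  qed simp
  have step2: "Suc (lzs ((P0 @ replicate i 0) @ (1 # take (q i) Y)) rest)
      \<le> lzs (P0 @ replicate i 0) ((1 # take (q i) Y) @ rest)"
    by (rule lzs_step_ge[OF _ nw]) simp
  have eqA: "(P0 @ replicate i 0) @ (1 # take (q i) Y) = DD K X Y @ W Y q i"
    using W_prev[OF i, of Y q] by (simp add: P0_def word_def)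
  have eqB: "replicate i 0 @ (1 # take (q i) Y) @ rest = word Y q i @ rest" by (simp add: word_def)
  from step1 step2 have "Suc (Suc (lzs ((P0 @ replicate i 0) @ (1 # take (q i) Y)) rest))
     \<le> lzs P0 (replicate i 0 @ (1 # take (q i) Y) @ rest)" by linarith
  from this[unfolded eqA eqB] show ?thesis by (simp add: P0_def)
qed

lemma LB_word3:
  assumes i: "1 \<le> i" "i < r" and rest: "rest = [] \<or> hd rest = 0"
    and X: "X = [] \<or> X = [5]"
  shows "3 + lzs (DD K X (Y3 r) @ W (Y3 r) (q3 r) i) rest
     \<le> lzs (DD K X (Y3 r) @ W (Y3 r) (q3 r) (i - 1)) (word (Y3 r) (q3 r) i @ rest)"
proof -
  define Y where "Y = Y3 r"
  define q where "q = q3 r"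
  have Y: "0 \<notin> set Y" "1 \<notin> set Y" using Y3_set[of r] by (auto simp: Y_def)
  define P0 where "P0 = DD K X Y @ W Y q (i - 1)"
  define t where "t = take (q (i - 1)) Y"
  define D where "D = replicate (r + 1 - i) (2::nat) @ 3 # replicate i 2"
  have td: "take (q i) Y = t @ D" using Y3_delta[OF i] by (simp add: Y_def q_def t_def D_def)
  have lt: "length t = q (i - 1)"
  proof -
    have "length (take (q3 r (i - 1)) (Y3 r)) = q3 r (i - 1)"
      using Y3_take[of "i - 1" r] i by (simp add: pw_length U3_def q3_def)
    thus ?thesis by (simp add: t_def Y_def q_def)
  qed
  obtain D' where D2: "D = 2 # D'" using i by (cases "r + 1 - i") (auto simp: D_def)
  have ts: "take (Suc (q (i - 1))) Y = t @ [2]"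
  proof -
    have "take (Suc (q (i - 1))) (take (q i) Y) = t @ [2]" using td lt D2
      by (simp add: take_append)
    moreover have "q3 r i = q3 r (i - 1) + (r + 2)" using i by (cases i) (auto simp: q3_def)
    hence "Suc (q (i - 1)) \<le> q i" by (simp add: q_def)
    ultimately show ?thesis by (simp add: min_def)
  qed
  have qlen: "q (i - 1) < length Y"
  proof -
    have "length (take (q i) Y) = length t + length D" using td by simp
    hence "length t < length (take (q i) Y)" by (simp add: D_def)
    thus ?thesis using lt by simp
  qed
  have ns: "\<not> sublist (1 # (t @ [2])) (DD K X Y @ W Y q (i - 1) @ replicate i 0)"
  proof (rule N2[OF Y])
    show "take (Suc (q (i - 1))) (t @ [2]) = take (Suc (q (i - 1))) Y" using ts lt by simp
    show "q (i - 1) < length Y" by (rule qlen)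
    show "\<And>l. l \<le> i - 1 \<Longrightarrow> q l \<le> q (i - 1)" by (simp add: q_def q3_mono)
  qed (use X in auto)
  have n1: "\<not> sublist (replicate i 0 @ [1]) P0"
    unfolding P0_def using N1[OF Y, of X "i - 1" i] X i by auto
  have step1: "Suc (lzs (P0 @ replicate i 0) ((1 # t) @ D @ rest))
      \<le> lzs P0 (replicate i 0 @ (1 # t) @ D @ rest)"
    by (rule lzs_step_ge) (use i n1 in auto)
  have step2: "Suc (lzs ((P0 @ replicate i 0) @ (1 # t)) (D @ rest))
      \<le> lzs (P0 @ replicate i 0) ((1 # t) @ D @ rest)"
  proof (rule lzs_step_ge)
    have "hd (D @ rest) = 2" using D2 by simp
    thus "D @ rest = [] \<or> \<not> sublist ((1 # t) @ [hd (D @ rest)]) (P0 @ replicate i 0)"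
      using ns by (simp add: P0_def)
  qed simp
  have whole: "(P0 @ replicate i 0) @ (1 # t) @ D = DD K X Y @ W Y q i"
    using W_prev[OF i(1), of Y q] td by (simp add: P0_def word_def)
  have step3: "Suc (lzs (((P0 @ replicate i 0) @ (1 # t)) @ D) rest)
      \<le> lzs ((P0 @ replicate i 0) @ (1 # t)) (D @ rest)"
  proof (rule lzs_step_ge)
    show "D \<noteq> []" by (simp add: D_def)
    show "rest = [] \<or> \<not> sublist (D @ [hd rest]) ((P0 @ replicate i 0) @ (1 # t))"
    proof (cases "rest = []")
      case False
      hence hr: "hd rest = 0" using rest by simp
      have "\<not> sublist (D @ [0]) ((P0 @ replicate i 0) @ (1 # t))"
      proof
        assume "sublist (D @ [0]) ((P0 @ replicate i 0) @ (1 # t))"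
        moreover have "sublist (3 # replicate i 2 @ [0]) (D @ [0])"
          unfolding D_def by (metis append.assoc append_Cons sublist_append_leftI sublist_order.order_refl)
        ultimately have "sublist (3 # replicate i 2 @ [0]) ((P0 @ replicate i 0) @ (1 # t))"
          by (meson sublist_order.order_trans)
        hence "sublist (3 # replicate i 2 @ [0]) (((P0 @ replicate i 0) @ (1 # t)) @ D)"
          by (rule sub_app_r)
        hence "sublist (3 # replicate i 2 @ [0]) (DD K X (Y3 r) @ W (Y3 r) (q3 r) i)"
          using whole by (simp add: Y_def q_def)
        thus False using N3[OF X i] by simp
      qed
      thus ?thesis using hr by simp
    qed simp
  qed
  have eqB: "replicate i 0 @ (1 # t) @ D @ rest = word Y q i @ rest" using td by (simp add: word_def)
  from step1 step2 step3 have "Suc (Suc (Suc (lzs (((P0 @ replicate i 0) @ (1 # t)) @ D) rest)))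
     \<le> lzs P0 (replicate i 0 @ (1 # t) @ D @ rest)" by linarith
  from this[unfolded eqB] have "3 + lzs (((P0 @ replicate i 0) @ (1 # t)) @ D) rest \<le> lzs P0 (word Y q i @ rest)"
    by simp
  hence "3 + lzs (DD K X Y @ W Y q i) rest \<le> lzs P0 (word Y q i @ rest)"
    using whole by (metis append.assoc)
  thus ?thesis by (simp add: P0_def Y_def q_def)
qed

lemma word_sublist: assumes "i \<le> K" "q i \<le> length Y"
  shows "sublist (word Y q i) (DD K [1] Y)"
proof -
  have "DD K [1] Y = replicate (K - i) 0 @ word Y q i @ (drop (q i) Y @ [4])"
    using assms by (simp add: DD_def word_def replicate_add[symmetric])
  thus ?thesis unfolding sublist_def by blast
qed

lemma UB_word:
  assumes "1 \<le> i" "i \<le> K" "q i \<le> length Y"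
  shows "lzs (DD K [1] Y @ W Y q (i - 1)) (word Y q i @ rest) \<le> 1 + lzs (DD K [1] Y @ W Y q i) rest"
proof -
  have "sublist (word Y q i) (DD K [1] Y @ W Y q (i - 1))"
  proof -
    have "sublist (word Y q i) (DD K [1] Y)" using assms(2,3) by (rule word_sublist)
    thus ?thesis by (rule sub_app_r)
  qed
  hence "lzs (DD K [1] Y @ W Y q (i - 1)) (word Y q i @ rest)
       \<le> Suc (lzs ((DD K [1] Y @ W Y q (i - 1)) @ word Y q i) rest)"
    using lzs_step_le word_ne by blast
  thus ?thesis using W_prev[OF assms(1), of Y q] by simp
qed


definition PC :: "nat \<Rightarrow> nat" where "PC p = (if p = 0 then 0 else Suc (RL 1 (p - 1)))"

lemma lzs_pad: "lzs P (replicate p c) \<le> PC p"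
  using run_le_lit[of P p c "[]"] by (simp add: PC_def)

lemma W_length: "length (W Y q k) \<le> k * (k + 1 + length Y)"
proof (induction k)
  case 0 thus ?case by simp
next
  case (Suc k)
  have "length (word Y q (Suc k)) \<le> Suc k + 1 + length Y" by (simp add: word_def)
  thus ?case using Suc by (simp add: W_Suc)
qed

lemma LB_generic:
  assumes "\<And>i rest. 1 \<le> i \<Longrightarrow> i \<le> m \<Longrightarrow> rest = [] \<or> hd rest = 0 \<Longrightarrow>
     c + lzs (D @ W Y q i) rest \<le> lzs (D @ W Y q (i - 1)) (word Y q i @ rest)"
  shows "c * m \<le> lzs [] (D @ W Y q m @ pad)"
proof -
  have "c * m \<le> lzs D (W Y q m)"
  proof (rule sum_LB)
    fix i assume i: "1 \<le> i" "i \<le> m"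
    show "c + lzs (D @ W Y q i) (Wr Y q i m) \<le> lzs (D @ W Y q (i - 1)) (Wr Y q (i - 1) m)"
      using assms[OF i Wr_hd] Wr_prev[OF i] by simp
  qed
  also have "\<dots> \<le> lzs [] (D @ W Y q m)" using lzs_mono_prefix[of "[]" D "W Y q m"] by simp
  also have "\<dots> \<le> lzs [] ((D @ W Y q m) @ pad)" by (rule lzs_mono_app)
  finally show ?thesis by simp
qed

lemma UB_generic:
  assumes "\<And>i. 1 \<le> i \<Longrightarrow> i \<le> m \<Longrightarrow> i \<le> K \<and> q i \<le> length Y"
  shows "lzs [] (DD K [1] Y @ W Y q m @ pad) \<le> lzs [] (DD K [1] Y) + m + lzs (DD K [1] Y @ W Y q m) pad"
proof -
  have "lzs (DD K [1] Y) (W Y q m) \<le> m"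
  proof (rule sum_UB)
    fix i assume i: "1 \<le> i" "i \<le> m"
    show "lzs (DD K [1] Y @ W Y q (i - 1)) (Wr Y q (i - 1) m) \<le> 1 + lzs (DD K [1] Y @ W Y q i) (Wr Y q i m)"
      using UB_word[OF i(1), of K q Y "Wr Y q i m"] assms[OF i] Wr_prev[OF i] by simp
  qed
  moreover have "lzs [] (DD K [1] Y @ (W Y q m @ pad)) \<le> lzs [] (DD K [1] Y) + lzs (DD K [1] Y) (W Y q m @ pad)"
    using lzs_subadd[of "[]"] by simp
  moreover have "lzs (DD K [1] Y) (W Y q m @ pad) \<le> lzs (DD K [1] Y) (W Y q m) + lzs (DD K [1] Y @ W Y q m) pad"
    by (rule lzs_subadd)
  ultimately show ?thesis by simp
qed

lemma lzs_single: "lzs p [x] \<le> 1"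
  using lzs_le_length[of p "[x]"] by simp

lemma UB_DD: assumes "lzs (replicate K (0::nat) @ [1]) Y \<le> cY" "1 \<le> K"
  shows "lzs [] (DD K [1] Y) \<le> Suc (RL 1 (K - 1)) + 1 + cY + 1"
proof -
  have a: "lzs [] (replicate K (0::nat)) \<le> Suc (RL 1 (K - 1))"
    using run_le_lit[of "[]" K 0 "[]"] assms(2) by simp
  have "lzs [] (replicate K (0::nat) @ ([1] @ (Y @ [4]))) \<le> lzs [] (replicate K (0::nat)) + lzs ([] @ replicate K (0::nat)) ([1] @ (Y @ [4]))"
    by (rule lzs_subadd)
  moreover have "lzs (replicate K (0::nat)) ([1] @ (Y @ [4])) \<le> lzs (replicate K (0::nat)) [1] + lzs (replicate K (0::nat) @ [1]) (Y @ [4])"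
    by (rule lzs_subadd)
  moreover have "lzs (replicate K (0::nat) @ [1]) (Y @ [4]) \<le> lzs (replicate K (0::nat) @ [1]) Y + lzs ((replicate K (0::nat) @ [1]) @ Y) [4]"
    by (rule lzs_subadd)
  moreover have "lzs (replicate K (0::nat)) [1] \<le> 1" by (rule lzs_single)
  moreover have "lzs (replicate K (0::nat) @ [1] @ Y) [4] \<le> 1" by (rule lzs_single)
  ultimately show ?thesis using a assms(1) by (simp add: DD_def)
qed

lemma cY3: assumes "1 \<le> r" shows "lzs P (Y3 r) \<le> Suc (RL 1 (r - 1)) + 1 + RL 1 (r - 1)"
proof -
  have Y: "Y3 r = replicate r 2 @ [3] @ pw (U3 r) (r - 1)"
    using assms by (cases r) (auto simp: Y3_def pw_Suc U3_def)
  have a: "lzs P (replicate r 2 @ ([3] @ pw (U3 r) (r - 1))) \<le> Suc (RL 1 (r - 1)) + lzs (P @ replicate r 2) ([3] @ pw (U3 r) (r - 1))"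
    using run_le_lit[of P r 2] assms by simp
  have b: "lzs (P @ replicate r 2) ([3] @ pw (U3 r) (r - 1)) \<le> 1 + lzs (P @ replicate r 2 @ [3]) (pw (U3 r) (r - 1))"
    using lzs_step_le[of "[3]" "P @ replicate r 2" "pw (U3 r) (r - 1)"] by simp
  have c: "lzs ((P @ []) @ pw (U3 r) 1) (pw (U3 r) (r - 1) @ []) \<le> RL 1 (r - 1) + lzs ((P @ []) @ pw (U3 r) (1 + (r - 1))) []"
    by (rule run_le) (auto simp: U3_def)
  have "lzs (P @ replicate r 2 @ [3]) (pw (U3 r) (r - 1)) \<le> RL 1 (r - 1)"
    using c by (simp add: U3_def pw_Suc)
  thus ?thesis using a b Y by simp
qed

lemma cY2: "lzs P (replicate m 2) \<le> PC m"
  by (rule lzs_pad)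

definition T3 :: "nat \<Rightarrow> nat list \<Rightarrow> nat list" where
  "T3 r X = DD r X (Y3 r) @ W (Y3 r) (q3 r) (r - 1)"

lemma q3_le_len: "l < r \<Longrightarrow> q3 r l \<le> length (Y3 r)"
proof -
  assume "l < r"
  hence "length (take (q3 r l) (Y3 r)) = q3 r l"
    using Y3_take[of l r] by (simp add: pw_length U3_def q3_def)
  moreover have "length (take (q3 r l) (Y3 r)) \<le> length (Y3 r)" by simp
  ultimately show ?thesis by simp
qed

lemma Y3_01: "0 \<notin> set (Y3 r)" "1 \<notin> set (Y3 r)"
  using Y3_set[of r] by fastforce+

lemma F3_LB': assumes "2 \<le> r" "X = [] \<or> X = [5]"
  shows "3 * (r - 1) \<le> zss (T3 r X @ pad)"
proof -
  have "3 * (r - 1) \<le> lzs [] (DD r X (Y3 r) @ W (Y3 r) (q3 r) (r - 1) @ pad)"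
  proof (rule LB_generic)
    fix i :: nat and rest :: "nat list" assume i: "1 \<le> i" "i \<le> r - 1" and rest: "rest = [] \<or> hd rest = 0"
    show "3 + lzs (DD r X (Y3 r) @ W (Y3 r) (q3 r) i) rest
       \<le> lzs (DD r X (Y3 r) @ W (Y3 r) (q3 r) (i - 1)) (word (Y3 r) (q3 r) i @ rest)"
      using LB_word3[OF i(1) _ rest assms(2)] i assms(1) by simp
  qed
  thus ?thesis by (simp add: zss_def T3_def)
qed

lemma F3_LB0: assumes "2 \<le> r"
  shows "r - 1 \<le> zss (T3 r [1] @ pad)"
proof -
  have "1 * (r - 1) \<le> lzs [] (DD r [1] (Y3 r) @ W (Y3 r) (q3 r) (r - 1) @ pad)"
  proof (rule LB_generic)
    fix i :: nat and rest :: "nat list" assume i: "1 \<le> i" "i \<le> r - 1" and rest: "rest = [] \<or> hd rest = 0"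
    have m: "mono (q3 r)" by (rule monoI) (rule q3_mono)
    have "q3 r (i - 1) < q3 r i" using i by (cases i) (auto simp: q3_def)
    thus "1 + lzs (DD r [1] (Y3 r) @ W (Y3 r) (q3 r) i) rest
       \<le> lzs (DD r [1] (Y3 r) @ W (Y3 r) (q3 r) (i - 1)) (word (Y3 r) (q3 r) i @ rest)"
      using LB_word1[OF Y3_01 m q3_le_len _ i(1) rest] i assms by simp
  qed
  thus ?thesis by (simp add: zss_def T3_def)
qed

lemma F3_UB: assumes "2 \<le> r"
  shows "zss (T3 r [1] @ replicate p 6) \<le> (r - 1) + 5 + 3 * RL 1 (r - 1) + PC p"
proof -
  have "lzs [] (DD r [1] (Y3 r) @ W (Y3 r) (q3 r) (r - 1) @ replicate p 6)
     \<le> lzs [] (DD r [1] (Y3 r)) + (r - 1) + lzs (DD r [1] (Y3 r) @ W (Y3 r) (q3 r) (r - 1)) (replicate p 6)"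
    by (rule UB_generic) (use assms q3_le_len in auto)
  moreover have "lzs [] (DD r [1] (Y3 r)) \<le> Suc (RL 1 (r - 1)) + 1 + (Suc (RL 1 (r - 1)) + 1 + RL 1 (r - 1)) + 1"
    by (rule UB_DD) (use cY3 assms in auto)
  moreover have "lzs (DD r [1] (Y3 r) @ W (Y3 r) (q3 r) (r - 1)) (replicate p 6) \<le> PC p" by (rule lzs_pad)
  ultimately show ?thesis by (simp add: zss_def T3_def)
qed

lemma DD_form: "DD K X Y @ Z = replicate K 0 @ X @ (Y @ [4] @ Z)" by (simp add: DD_def)

lemma ed_T3: "ed (T3 r [1] @ pad) (T3 r [5] @ pad) = 1" "ed (T3 r [1] @ pad) (T3 r [] @ pad) = 1"
proof -
  define R where "R = Y3 r @ [4] @ W (Y3 r) (q3 r) (r - 1) @ pad"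
  have e1: "T3 r [1] @ pad = replicate r 0 @ 1 # R" by (simp add: T3_def DD_def R_def)
  have e5: "T3 r [5] @ pad = replicate r 0 @ 5 # R" by (simp add: T3_def DD_def R_def)
  have e0: "T3 r [] @ pad = replicate r 0 @ R" by (simp add: T3_def DD_def R_def)
  show "ed (T3 r [1] @ pad) (T3 r [5] @ pad) = 1"
    unfolding e1 e5 by (rule ed_one) (rule order_trans[OF ed_app_same_le ed_sub1], simp)
  show "ed (T3 r [1] @ pad) (T3 r [] @ pad) = 1"
    unfolding e1 e0 by (rule ed_one) (rule order_trans[OF ed_app_same_le ed_del1], simp)
qed

lemma len_T3: "length (T3 r [5] @ pad) = length (T3 r [1] @ pad)" "length (T3 r [] @ pad) + 1 = length (T3 r [1] @ pad)"
  by (simp_all add: T3_def DD_def)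

definition T2 :: "nat \<Rightarrow> nat list \<Rightarrow> nat list" where
  "T2 m X = DD m X (replicate m 2) @ W (replicate m 2) id m"

lemma Y2_01: "0 \<notin> set (replicate m (2::nat))" "1 \<notin> set (replicate m (2::nat))" by auto

lemma F2_LB': assumes "X = [] \<or> X = [5] \<or> X = [5, 1]"
  shows "2 * m \<le> zss (T2 m X @ pad)"
proof -
  have "2 * m \<le> lzs [] (DD m X (replicate m 2) @ W (replicate m 2) id m @ pad)"
  proof (rule LB_generic)
    fix i :: nat and rest :: "nat list" assume i: "1 \<le> i" "i \<le> m" and rest: "rest = [] \<or> hd rest = 0"
    show "2 + lzs (DD m X (replicate m 2) @ W (replicate m 2) id i) rest
       \<le> lzs (DD m X (replicate m 2) @ W (replicate m 2) id (i - 1)) (word (replicate m 2) id i @ rest)"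
      by (rule LB_word2[OF Y2_01]) (use i rest assms in \<open>auto simp: mono_def\<close>)
  qed
  thus ?thesis by (simp add: zss_def T2_def)
qed

lemma F2_LB0: "m \<le> zss (T2 m [1] @ pad)"
proof -
  have "1 * m \<le> lzs [] (DD m [1] (replicate m 2) @ W (replicate m 2) id m @ pad)"
  proof (rule LB_generic)
    fix i :: nat and rest :: "nat list" assume i: "1 \<le> i" "i \<le> m" and rest: "rest = [] \<or> hd rest = 0"
    show "1 + lzs (DD m [1] (replicate m 2) @ W (replicate m 2) id i) rest
       \<le> lzs (DD m [1] (replicate m 2) @ W (replicate m 2) id (i - 1)) (word (replicate m 2) id i @ rest)"
      by (rule LB_word1[OF Y2_01]) (use i rest in \<open>auto simp: mono_def\<close>)
  qed
  thus ?thesis by (simp add: zss_def T2_def)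
qed

lemma F2_UB: assumes "1 \<le> m"
  shows "zss (T2 m [1] @ replicate p 6) \<le> m + 4 + 2 * RL 1 (m - 1) + PC p"
proof -
  have "lzs [] (DD m [1] (replicate m 2) @ W (replicate m 2) id m @ replicate p 6)
     \<le> lzs [] (DD m [1] (replicate m 2)) + m + lzs (DD m [1] (replicate m 2) @ W (replicate m 2) id m) (replicate p 6)"
    by (rule UB_generic) auto
  moreover have "lzs [] (DD m [1] (replicate m 2)) \<le> Suc (RL 1 (m - 1)) + 1 + PC m + 1"
    by (rule UB_DD) (use cY2 assms in auto)
  moreover have "lzs (DD m [1] (replicate m 2) @ W (replicate m 2) id m) (replicate p 6) \<le> PC p" by (rule lzs_pad)
  moreover have "PC m = Suc (RL 1 (m - 1))" using assms by (simp add: PC_def)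
  ultimately show ?thesis by (simp add: zss_def T2_def)
qed

lemma ed_T2: "ed (T2 m [1] @ pad) (T2 m [5] @ pad) = 1" "ed (T2 m [1] @ pad) (T2 m [] @ pad) = 1"
   "ed (T2 m [1] @ pad) (T2 m [5, 1] @ pad) = 1"
proof -
  define R where "R = replicate m 2 @ [4] @ W (replicate m 2) id m @ pad"
  have e1: "T2 m [1] @ pad = replicate m 0 @ 1 # R" by (simp add: T2_def DD_def R_def)
  have e5: "T2 m [5] @ pad = replicate m 0 @ 5 # R" by (simp add: T2_def DD_def R_def)
  have e0: "T2 m [] @ pad = replicate m 0 @ R" by (simp add: T2_def DD_def R_def)
  have e51: "T2 m [5, 1] @ pad = replicate m 0 @ 5 # 1 # R" by (simp add: T2_def DD_def R_def)
  show "ed (T2 m [1] @ pad) (T2 m [5] @ pad) = 1"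
    unfolding e1 e5 by (rule ed_one) (rule order_trans[OF ed_app_same_le ed_sub1], simp)
  show "ed (T2 m [1] @ pad) (T2 m [] @ pad) = 1"
    unfolding e1 e0 by (rule ed_one) (rule order_trans[OF ed_app_same_le ed_del1], simp)
  show "ed (T2 m [1] @ pad) (T2 m [5, 1] @ pad) = 1"
    unfolding e1 e51 by (rule ed_one) (rule order_trans[OF ed_app_same_le ed_ins1], simp)
qed

lemma len_T2: "length (T2 m [5] @ pad) = length (T2 m [1] @ pad)" "length (T2 m [] @ pad) + 1 = length (T2 m [1] @ pad)"
  "length (T2 m [5, 1] @ pad) = length (T2 m [1] @ pad) + 1"
  by (simp_all add: T2_def DD_def)

lemma len_T3_bounds: "r \<le> length (T3 r [1])" "length (T3 r [1]) \<le> 2 * (r + 1) ^ 3"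
proof -
  show "r \<le> length (T3 r [1])" by (simp add: T3_def DD_def)
  have "length (W (Y3 r) (q3 r) (r - 1)) \<le> (r - 1) * (r - 1 + 1 + r * (r + 1))"
    using W_length[of "Y3 r" "q3 r" "r - 1"] by (simp add: Y3_length)
  also have "\<dots> \<le> r * (r + 1 + r * (r + 1))" by (intro mult_le_mono) auto
  finally have "length (T3 r [1]) \<le> r + 2 + r * (r + 1) + r * (r + 1 + r * (r + 1))"
    by (simp add: T3_def DD_def Y3_length)
  also have "\<dots> \<le> 2 * (r + 1) ^ 3" by (simp add: power3_eq_cube algebra_simps)
  finally show "length (T3 r [1]) \<le> 2 * (r + 1) ^ 3" .
qed

lemma len_T2_bounds: "m \<le> length (T2 m [1])" "length (T2 m [1]) \<le> 3 * (m + 1) ^ 2"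
proof -
  show "m \<le> length (T2 m [1])" by (simp add: T2_def DD_def)
  have "length (W (replicate m (2::nat)) id m) \<le> m * (m + 1 + m)"
    using W_length[of "replicate m (2::nat)" id m] by simp
  hence "length (T2 m [1]) \<le> m + 2 + m + m * (m + 1 + m)" by (simp add: T2_def DD_def)
  also have "\<dots> \<le> 3 * (m + 1) ^ 2" by (simp add: power2_eq_square algebra_simps)
  finally show "length (T2 m [1]) \<le> 3 * (m + 1) ^ 2" .
qed


lemma ln2_half: "1 / 2 \<le> ln (2::real)"
proof -
  have "ln (1 / 2 :: real) \<le> 1 / 2 - 1" by (rule ln_le_minus_one) simp
  moreover have "ln (1 / 2 :: real) = - ln 2" by (simp add: ln_div)
  ultimately show ?thesis by simp
qed

lemma ln_le_sqrt: "1 \<le> x \<Longrightarrow> ln x \<le> 2 * sqrt (x::real)"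
proof -
  assume x: "1 \<le> x"
  have "ln (sqrt x) \<le> sqrt x - 1" using x by (intro ln_le_minus_one) simp
  moreover have "ln (sqrt x) = ln x / 2" using x by (simp add: ln_sqrt)
  ultimately show ?thesis by simp
qed

lemma pow2_bound: fixes R a x k :: nat
  assumes h: "2 ^ R \<le> a * x ^ k" and x: "1 \<le> x" and a: "1 \<le> a"
  shows "real R \<le> 2 * real a + 4 * real k * sqrt (real x)"
proof -
  have h': "(2::real) ^ R \<le> real a * real x ^ k"
    using h by (metis of_nat_le_iff of_nat_mult of_nat_numeral of_nat_power)
  have "ln ((2::real) ^ R) \<le> ln (real a * real x ^ k)"
    using h' x a by (subst ln_le_cancel_iff) auto
  hence "real R * ln 2 \<le> ln (real a) + real k * ln (real x)"
    using x a by (simp add: ln_mult ln_realpow)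
  moreover have "ln (real a) \<le> real a" using a ln_le_minus_one[of "real a"] by simp
  moreover have "ln (real x) \<le> 2 * sqrt (real x)" using x by (intro ln_le_sqrt) simp
  moreover have "real R * (1 / 2) \<le> real R * ln 2" using ln2_half by (intro mult_left_mono) auto
  ultimately have "real R * (1 / 2) \<le> real a + real k * (2 * sqrt (real x))"
    by (smt (verit) mult_left_mono of_nat_0_le_iff)
  thus ?thesis by simp
qed

definition rho :: "(nat \<Rightarrow> nat) \<Rightarrow> nat \<Rightarrow> nat" where
  "rho N n = (GREATEST r. N r \<le> n)"

lemma rho_props: assumes N: "\<And>r. r \<le> N r" and n: "N r0 \<le> n"
  shows "N (rho N n) \<le> n" "r0 \<le> rho N n" "n < N (Suc (rho N n))"
proof -
  have b: "\<forall>y. N y \<le> n \<longrightarrow> y \<le> n" using N le_trans by blast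
  show a: "N (rho N n) \<le> n" unfolding rho_def by (rule GreatestI_nat[where k=r0 and b=n]) (use n b in auto)
  show "r0 \<le> rho N n" unfolding rho_def by (rule Greatest_le_nat[where b=n]) (use n b in auto)
  show "n < N (Suc (rho N n))"
  proof (rule ccontr)
    assume "\<not> n < N (Suc (rho N n))"
    hence "Suc (rho N n) \<le> rho N n" unfolding rho_def
      by (intro Greatest_le_nat[where b=n]) (use b in \<open>auto simp: rho_def\<close>)
    thus False by simp
  qed
qed

lemma liminf_from_bound:
  assumes "\<And>R. R \<ge> R1 \<Longrightarrow> \<exists>N. \<forall>n\<ge>N. c - C / sqrt (real R) \<le> f n"
  shows "ereal c \<le> liminf (\<lambda>n. ereal (f n))"
proof (unfold le_Liminf_iff, intro allI impI)
  fix y :: ereal assume y: "y < ereal c"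
  show "\<forall>\<^sub>F n in sequentially. y < ereal (f n)"
  proof (cases y)
    case MInf thus ?thesis by simp
  next
    case PInf thus ?thesis using y by simp
  next
    case (real y')
    hence yc: "y' < c" using y by simp
    define R where "R = max R1 (nat \<lceil>(\<bar>C\<bar> / (c - y')) ^ 2\<rceil> + 1)"
    have R1: "R \<ge> R1" by (simp add: R_def)
    have "(\<bar>C\<bar> / (c - y')) ^ 2 < real R"
      unfolding R_def by linarith
    hence "\<bar>C\<bar> / (c - y') < sqrt (real R)" by (simp add: real_less_rsqrt)
    moreover have Rpos: "0 < sqrt (real R)" using R_def by simp
    ultimately have "\<bar>C\<bar> < (c - y') * sqrt (real R)" using yc by (simp add: divide_less_eq mult.commute)
    hence "C / sqrt (real R) < c - y'" using Rpos by (simp add: divide_less_eq)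
    moreover obtain N where "\<forall>n\<ge>N. c - C / sqrt (real R) \<le> f n" using assms[OF R1] by blast
    ultimately have "\<forall>n\<ge>N. y' < f n" by force
    thus ?thesis using real by (auto simp: eventually_at_top_linorder)
  qed
qed


lemma sup_ge: fixes S :: "real set" assumes "x \<in> S" and h: "\<And>y. y \<in> S \<Longrightarrow> y \<le> B" shows "x \<le> Sup S"
  using assms(1) bdd_aboveI[OF h] by (rule cSup_upper)

lemma div_le_num: "real a / real b \<le> real a"
proof (cases "b = 0")
  case True thus ?thesis by simp
next
  case False
  hence "1 \<le> real b" by simp
  have "real a * 1 \<le> real a * real b" using \<open>1 \<le> real b\<close> by (intro mult_left_mono) auto
  thus ?thesis using \<open>1 \<le> real b\<close> by (simp add: divide_le_eq)
qed

lemma zss_le_len: "zss T \<le> length T" unfolding zss_def by (rule lzs_le_length)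

lemma MS_sub_ge: fixes T T' :: "nat list" shows "length T = n \<Longrightarrow> length T' = n \<Longrightarrow> ed T T' = 1 \<Longrightarrow> real (zss T') / real (zss T) \<le> MS_sub n"
  unfolding MS_sub_def
proof (rule sup_ge[where B="real n"])
  fix y assume "y \<in> {real (zss T') / real (zss T) |T T' :: nat list. length T = n \<and> length T' = n \<and> ed T T' = 1}"
  then obtain A B :: "nat list" where "y = real (zss B) / real (zss A)" "length B = n" by blast
  thus "y \<le> real n" using div_le_num[of "zss B" "zss A"] zss_le_len[of B] by simp
qed blast

lemma MS_ins_ge: fixes T T' :: "nat list" shows "length T = n \<Longrightarrow> length T' = n + 1 \<Longrightarrow> ed T T' = 1 \<Longrightarrow> real (zss T') / real (zss T) \<le> MS_ins n"
  unfolding MS_ins_def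
proof (rule sup_ge[where B="real n + 1"])
  fix y assume "y \<in> {real (zss T') / real (zss T) |T T' :: nat list. length T = n \<and> length T' = n + 1 \<and> ed T T' = 1}"
  then obtain A B :: "nat list" where "y = real (zss B) / real (zss A)" "length B = n + 1" by blast
  thus "y \<le> real n + 1" using div_le_num[of "zss B" "zss A"] zss_le_len[of B] by simp
qed blast

lemma MS_del_ge: fixes T T' :: "nat list" shows "length T = n \<Longrightarrow> length T' + 1 = n \<Longrightarrow> ed T T' = 1 \<Longrightarrow> real (zss T') / real (zss T) \<le> MS_del n"
  unfolding MS_del_def
proof (rule sup_ge[where B="real n"])
  fix y assume "y \<in> {real (zss T') / real (zss T) |T T' :: nat list. length T = n \<and> length T' + 1 = n \<and> ed T T' = 1}"
  then obtain A B :: "nat list" where "y = real (zss B) / real (zss A)" "length B + 1 = n" by blast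
  thus "y \<le> real n" using div_le_num[of "zss B" "zss A"] zss_le_len[of B] by simp
qed blast

lemma AS_sub_ge: fixes T T' :: "nat list" shows "length T = n \<Longrightarrow> length T' = n \<Longrightarrow> ed T T' = 1 \<Longrightarrow> real (zss T') - real (zss T) \<le> AS_sub n"
  unfolding AS_sub_def
proof (rule sup_ge[where B="real n"])
  fix y assume "y \<in> {real (zss T') - real (zss T) |T T' :: nat list. length T = n \<and> length T' = n \<and> ed T T' = 1}"
  then obtain A B :: "nat list" where "y = real (zss B) - real (zss A)" "length B = n" by blast
  thus "y \<le> real n" using zss_le_len[of B] by simp
qed blast

lemma AS_ins_ge: fixes T T' :: "nat list" shows "length T = n \<Longrightarrow> length T' = n + 1 \<Longrightarrow> ed T T' = 1 \<Longrightarrow> real (zss T') - real (zss T) \<le> AS_ins n"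
  unfolding AS_ins_def
proof (rule sup_ge[where B="real n + 1"])
  fix y assume "y \<in> {real (zss T') - real (zss T) |T T' :: nat list. length T = n \<and> length T' = n + 1 \<and> ed T T' = 1}"
  then obtain A B :: "nat list" where "y = real (zss B) - real (zss A)" "length B = n + 1" by blast
  thus "y \<le> real n + 1" using zss_le_len[of B] by simp
qed blast

lemma AS_del_ge: fixes T T' :: "nat list" shows "length T = n \<Longrightarrow> length T' + 1 = n \<Longrightarrow> ed T T' = 1 \<Longrightarrow> real (zss T') - real (zss T) \<le> AS_del n"
  unfolding AS_del_def
proof (rule sup_ge[where B="real n"])
  fix y assume "y \<in> {real (zss T') - real (zss T) |T T' :: nat list. length T = n \<and> length T' + 1 = n \<and> ed T T' = 1}"
  then obtain A B :: "nat list" where "y = real (zss B) - real (zss A)" "length B + 1 = n" by blast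
  thus "y \<le> real n" using zss_le_len[of B] by simp
qed blast

lemma ratio_bound: fixes c K zp z x :: real
  assumes x: "1 \<le> x" and K: "0 \<le> K" and c: "0 \<le> c" and zp: "c * x \<le> zp"
    and z1: "x \<le> z" and z2: "z \<le> x + K * sqrt x"
  shows "c - c * K / sqrt x \<le> zp / z"
proof -
  define E where "E = z - x"
  have E0: "0 \<le> E" "E \<le> K * sqrt x" using z1 z2 by (auto simp: E_def)
  have zpos: "0 < z" using x z1 by simp
  have "c * x / z \<le> zp / z" using zp zpos by (simp add: divide_right_mono)
  moreover have "c - c * E / x \<le> c * x / z"
  proof -
    have zE: "z = x + E" by (simp add: E_def)
    have "(c - c * E / x) * (x + E) = c * x - c * E * E / x"
      using x by (simp add: field_simps)
    hence "(c - c * E / x) * z = c * x - c * E * E / x" using zE by simp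
    also have "\<dots> \<le> c * x" using x c E0 by (simp add: divide_nonneg_nonneg)
    finally show ?thesis using zpos by (simp add: pos_le_divide_eq)
  qed
  moreover have "c * E / x \<le> c * K / sqrt x"
  proof -
    have sx: "sqrt x * sqrt x = x" using x by simp
    have sp: "0 < sqrt x" using x by simp
    have "c * E / x \<le> c * (K * sqrt x) / x" using E0 c x by (intro divide_right_mono mult_left_mono) auto
    also have "\<dots> = c * K / sqrt x" using sx sp by (simp add: field_simps)
    finally show ?thesis .
  qed
  ultimately show ?thesis by linarith
qed

lemma b_bound: fixes a K zp z x :: real
  assumes x: "1 \<le> x" and K: "0 \<le> K" and a: "0 \<le> a" and zp: "a * x \<le> zp"
    and z1: "x \<le> z" and z2: "z \<le> x + K * sqrt x"
  shows "(a - 1) * z - (a * K) * sqrt z \<le> zp - z"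
proof -
  have "sqrt x \<le> sqrt z" using z1 by simp
  hence "a * K * sqrt x \<le> a * K * sqrt z" using a K by (simp add: mult_left_mono)
  moreover have "a * z \<le> a * x + a * K * sqrt x" using z2 a by (metis distrib_left mult.assoc mult_left_mono)
  ultimately show ?thesis using zp by (simp add: algebra_simps)
qed

lemma sqrt_ge1: "1 \<le> x \<Longrightarrow> 1 \<le> sqrt (x::real)" by simp


lemma sqrt_mono_nat: "a \<le> b \<Longrightarrow> sqrt (real a) \<le> sqrt (real b)" by simp

lemma sqrt_r_le: "2 \<le> r \<Longrightarrow> sqrt (real r) \<le> 2 * sqrt (real (r - 1))"
proof -
  assume r: "2 \<le> r"
  have "real r \<le> 4 * real (r - 1)" using r by linarith
  hence "sqrt (real r) \<le> sqrt (4 * real (r - 1))" by (rule real_sqrt_le_mono)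
  also have "\<dots> = 2 * sqrt (real (r - 1))" by (simp add: real_sqrt_mult)
  finally show ?thesis .
qed

lemma R1_bound: "1 \<le> r \<Longrightarrow> real (RL 1 (r - 1)) \<le> 4 + 4 * sqrt (real r)"
proof -
  assume r: "1 \<le> r"
  have "2 ^ RL 1 (r - 1) \<le> 2 * r ^ 1" using RL1_bound[of "r - 1"] r by simp
  from pow2_bound[OF this] r show ?thesis by simp
qed

lemma PC_bound: assumes "p \<le> a * x ^ k" "1 \<le> x" "1 \<le> a"
  shows "real (PC p) \<le> 1 + 4 * real a + 4 * real k * sqrt (real x)"
proof (cases "p = 0")
  case True thus ?thesis by (simp add: PC_def)
next
  case False
  have "2 ^ RL 1 (p - 1) \<le> (2 * a) * x ^ k" using RL1_bound[of "p - 1"] False assms(1) by simp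
  from pow2_bound[OF this assms(2)] assms(3) have "real (RL 1 (p - 1)) \<le> 2 * real (2 * a) + 4 * real k * sqrt (real x)"
    by simp
  thus ?thesis using False by (simp add: PC_def)
qed

lemma E3_pad: assumes r: "2 \<le> r" and p: "p \<le> 108 * r ^ 3"
  shows "real (5 + 3 * RL 1 (r - 1) + PC p) \<le> 500 * sqrt (real (r - 1))"
proof -
  have a: "real (RL 1 (r - 1)) \<le> 4 + 4 * sqrt (real r)" using R1_bound r by simp
  have b: "real (PC p) \<le> 1 + 4 * 108 + 4 * 3 * sqrt (real r)" using PC_bound[OF p] r by simp
  have c: "sqrt (real r) \<le> 2 * sqrt (real (r - 1))" by (rule sqrt_r_le[OF r])
  have d: "1 \<le> sqrt (real (r - 1))" using r by simp
  show ?thesis using a b c d by (simp only: of_nat_add of_nat_mult of_nat_numeral)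
qed

lemma E3_0: assumes r: "2 \<le> r"
  shows "real (5 + 3 * RL 1 (r - 1)) \<le> 41 * sqrt (real (r - 1))"
proof -
  have a: "real (RL 1 (r - 1)) \<le> 4 + 4 * sqrt (real r)" using R1_bound r by simp
  have c: "sqrt (real r) \<le> 2 * sqrt (real (r - 1))" by (rule sqrt_r_le[OF r])
  have d: "1 \<le> sqrt (real (r - 1))" using r by simp
  show ?thesis using a c d by (simp only: of_nat_add of_nat_mult of_nat_numeral)
qed

lemma E2_pad: assumes m: "1 \<le> m" and p: "p \<le> 27 * m ^ 2"
  shows "real (4 + 2 * RL 1 (m - 1) + PC p) \<le> 140 * sqrt (real m)"
proof -
  have a: "real (RL 1 (m - 1)) \<le> 4 + 4 * sqrt (real m)" using R1_bound m by simp
  have b: "real (PC p) \<le> 1 + 4 * 27 + 4 * 2 * sqrt (real m)" using PC_bound[OF p] m by simp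
  have d: "1 \<le> sqrt (real m)" using m by simp
  show ?thesis using a b d by (simp only: of_nat_add of_nat_mult of_nat_numeral)
qed

lemma E2_0: assumes m: "1 \<le> m"
  shows "real (4 + 2 * RL 1 (m - 1)) \<le> 20 * sqrt (real m)"
proof -
  have a: "real (RL 1 (m - 1)) \<le> 4 + 4 * sqrt (real m)" using R1_bound m by simp
  have d: "1 \<le> sqrt (real m)" using m by simp
  show ?thesis using a d by (simp only: of_nat_add of_nat_mult of_nat_numeral)
qed

definition N3 :: "nat \<Rightarrow> nat" where "N3 r = length (T3 r [1])"
definition N2 :: "nat \<Rightarrow> nat" where "N2 m = length (T2 m [1])"

lemma F3_at: assumes "N3 R \<le> n" "2 \<le> R"
  shows "\<exists>r p. R \<le> r \<and> 2 \<le> r \<and> N3 r + p = n \<and> p \<le> 108 * r ^ 3"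
proof -
  have N: "\<And>r. r \<le> N3 r" using len_T3_bounds(1) by (simp add: N3_def)
  define r where "r = rho N3 n"
  have r: "N3 r \<le> n" "R \<le> r" "n < N3 (Suc r)" using rho_props[OF N assms(1)] by (auto simp: r_def)
  have "N3 (Suc r) \<le> 2 * (r + 2) ^ 3" using len_T3_bounds(2)[of "Suc r"] by (simp add: N3_def)
  also have "\<dots> \<le> 2 * (3 * r) ^ 3" using r(2) assms(2) by (intro mult_le_mono2 power_mono) auto
  also have "\<dots> = 54 * r ^ 3" by (simp add: power_mult_distrib)
  finally have "n - N3 r \<le> 108 * r ^ 3" using r(3) by simp
  thus ?thesis using r assms(2) by (intro exI[of _ r] exI[of _ "n - N3 r"]) auto
qed

lemma F2_at: assumes "N2 R \<le> n" "1 \<le> R"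
  shows "\<exists>m p. R \<le> m \<and> 1 \<le> m \<and> N2 m + p = n \<and> p \<le> 27 * m ^ 2 \<and> n \<le> 27 * m ^ 2"
proof -
  have N: "\<And>r. r \<le> N2 r" using len_T2_bounds(1) by (simp add: N2_def)
  define m where "m = rho N2 n"
  have m: "N2 m \<le> n" "R \<le> m" "n < N2 (Suc m)" using rho_props[OF N assms(1)] by (auto simp: m_def)
  have "N2 (Suc m) \<le> 3 * (m + 2) ^ 2" using len_T2_bounds(2)[of "Suc m"] by (simp add: N2_def)
  also have "\<dots> \<le> 3 * (3 * m) ^ 2" using m(2) assms(2) by (intro mult_le_mono2 power_mono) auto
  also have "\<dots> = 27 * m ^ 2" by (simp add: power_mult_distrib)
  finally have "n \<le> 27 * m ^ 2" using m(3) by simp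
  thus ?thesis using m assms(2) by (intro exI[of _ m] exI[of _ "n - N2 m"]) auto
qed

lemma a_sub: "ereal 3 \<le> liminf (\<lambda>n. ereal (MS_sub n))"
proof (rule liminf_from_bound[where ?R1.0=1 and C=1500])
  fix R :: nat assume R: "1 \<le> R"
  show "\<exists>N. \<forall>n\<ge>N. 3 - 1500 / sqrt (real R) \<le> MS_sub n"
  proof (intro exI allI impI)
    fix n assume n: "N3 (Suc R) \<le> n"
    obtain r p where rp: "Suc R \<le> r" "2 \<le> r" "N3 r + p = n" "p \<le> 108 * r ^ 3"
      using F3_at[OF n] R by auto
    define T where "T = T3 r [1] @ replicate p 6"
    define T' where "T' = T3 r [5] @ replicate p 6"
    have lT: "length T = n" "length T' = n" using rp len_T3 by (auto simp: T_def T'_def N3_def)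
    have ms: "real (zss T') / real (zss T) \<le> MS_sub n"
      by (rule MS_sub_ge[OF lT]) (unfold T_def T'_def, rule ed_T3)
    define x where "x = real (r - 1)"
    have x1: "1 \<le> x" using rp by (simp add: x_def)
    have "3 - 3 * 500 / sqrt x \<le> real (zss T') / real (zss T)"
    proof (rule ratio_bound[OF x1])
      show "3 * x \<le> real (zss T')" using F3_LB'[OF rp(2), of "[5]" "replicate p 6"] by (simp add: x_def T'_def)
      show "x \<le> real (zss T)" using F3_LB0[OF rp(2), of "replicate p 6"] by (simp add: x_def T_def)
      show "real (zss T) \<le> x + 500 * sqrt x"
        using F3_UB[OF rp(2), of p] E3_pad[OF rp(2,4)] by (simp add: x_def T_def)
    qed auto
    moreover have "1500 / sqrt x \<le> 1500 / sqrt (real R)"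
      using rp R by (intro divide_left_mono) (auto simp: x_def)
    ultimately show "3 - 1500 / sqrt (real R) \<le> MS_sub n" using ms by simp
  qed
qed

lemma a_del: "ereal 3 \<le> liminf (\<lambda>n. ereal (MS_del n))"
proof (rule liminf_from_bound[where ?R1.0=1 and C=1500])
  fix R :: nat assume R: "1 \<le> R"
  show "\<exists>N. \<forall>n\<ge>N. 3 - 1500 / sqrt (real R) \<le> MS_del n"
  proof (intro exI allI impI)
    fix n assume n: "N3 (Suc R) \<le> n"
    obtain r p where rp: "Suc R \<le> r" "2 \<le> r" "N3 r + p = n" "p \<le> 108 * r ^ 3"
      using F3_at[OF n] R by auto
    define T where "T = T3 r [1] @ replicate p 6"
    define T' where "T' = T3 r [] @ replicate p 6"
    have lT: "length T = n" "length T' + 1 = n" using rp len_T3 by (auto simp: T_def T'_def N3_def)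
    have ms: "real (zss T') / real (zss T) \<le> MS_del n"
      by (rule MS_del_ge[OF lT]) (unfold T_def T'_def, rule ed_T3)
    define x where "x = real (r - 1)"
    have x1: "1 \<le> x" using rp by (simp add: x_def)
    have "3 - 3 * 500 / sqrt x \<le> real (zss T') / real (zss T)"
    proof (rule ratio_bound[OF x1])
      show "3 * x \<le> real (zss T')" using F3_LB'[OF rp(2), of "[]" "replicate p 6"] by (simp add: x_def T'_def)
      show "x \<le> real (zss T)" using F3_LB0[OF rp(2), of "replicate p 6"] by (simp add: x_def T_def)
      show "real (zss T) \<le> x + 500 * sqrt x"
        using F3_UB[OF rp(2), of p] E3_pad[OF rp(2,4)] by (simp add: x_def T_def)
    qed auto
    moreover have "1500 / sqrt x \<le> 1500 / sqrt (real R)"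
      using rp R by (intro divide_left_mono) (auto simp: x_def)
    ultimately show "3 - 1500 / sqrt (real R) \<le> MS_del n" using ms by simp
  qed
qed

lemma a_ins: "ereal 2 \<le> liminf (\<lambda>n. ereal (MS_ins n))"
proof (rule liminf_from_bound[where ?R1.0=1 and C=280])
  fix R :: nat assume R: "1 \<le> R"
  show "\<exists>N. \<forall>n\<ge>N. 2 - 280 / sqrt (real R) \<le> MS_ins n"
  proof (intro exI allI impI)
    fix n assume n: "N2 R \<le> n"
    obtain m p where mp: "R \<le> m" "1 \<le> m" "N2 m + p = n" "p \<le> 27 * m ^ 2"
      using F2_at[OF n R] by auto
    define T where "T = T2 m [1] @ replicate p 6"
    define T' where "T' = T2 m [5, 1] @ replicate p 6"
    have lT: "length T = n" "length T' = n + 1" using mp len_T2 by (auto simp: T_def T'_def N2_def)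
    have ms: "real (zss T') / real (zss T) \<le> MS_ins n"
      by (rule MS_ins_ge[OF lT]) (unfold T_def T'_def, rule ed_T2)
    define x where "x = real m"
    have x1: "1 \<le> x" using mp by (simp add: x_def)
    have "2 - 2 * 140 / sqrt x \<le> real (zss T') / real (zss T)"
    proof (rule ratio_bound[OF x1])
      show "2 * x \<le> real (zss T')" using F2_LB'[of "[5, 1]" m "replicate p 6"] by (simp add: x_def T'_def)
      show "x \<le> real (zss T)" using F2_LB0[of m "replicate p 6"] by (simp add: x_def T_def)
      show "real (zss T) \<le> x + 140 * sqrt x"
        using F2_UB[OF mp(2), of p] E2_pad[OF mp(2,4)] by (simp add: x_def T_def)
    qed auto
    moreover have "280 / sqrt x \<le> 280 / sqrt (real R)"
      using mp R by (intro divide_left_mono) (auto simp: x_def)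
    ultimately show "2 - 280 / sqrt (real R) \<le> MS_ins n" using ms by simp
  qed
qed


lemma b_sub: "\<exists>c>0. \<forall>m. \<exists>T T' :: nat list. zss T \<ge> m \<and> length T' = length T \<and> ed T T' = 1 \<and>
        real (zss T') - real (zss T) \<ge> 2 * real (zss T) - c * sqrt (real (zss T))"
proof (intro exI[of _ "3 * 41"] conjI allI)
  fix m :: nat
  define r where "r = m + 2"
  have r2: "2 \<le> r" by (simp add: r_def)
  define T where "T = T3 r [1] @ replicate 0 6"
  define T' where "T' = T3 r [5] @ replicate 0 6"
  define x where "x = real (r - 1)"
  have x1: "1 \<le> x" using r2 by (simp add: x_def)
  have z1: "x \<le> real (zss T)" using F3_LB0[OF r2, of "replicate 0 6"] by (simp add: x_def T_def)
  have "(3 - 1) * real (zss T) - (3 * 41) * sqrt (real (zss T)) \<le> real (zss T') - real (zss T)"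
  proof (rule b_bound[OF x1 _ _ _ z1])
    show "3 * x \<le> real (zss T')" using F3_LB'[OF r2, of "[5]" "replicate 0 6"] by (simp add: x_def T'_def)
    show "real (zss T) \<le> x + 41 * sqrt x"
      using F3_UB[OF r2, of 0] E3_0[OF r2] by (simp add: x_def T_def PC_def)
  qed auto
  moreover have "m \<le> zss T" using z1 by (simp add: x_def r_def)
  moreover have "length T' = length T" using len_T3 by (simp add: T_def T'_def)
  moreover have "ed T T' = 1" by (unfold T_def T'_def, rule ed_T3)
  ultimately show "\<exists>T T' :: nat list. zss T \<ge> m \<and> length T' = length T \<and> ed T T' = 1 \<and>
        real (zss T') - real (zss T) \<ge> 2 * real (zss T) - (3 * 41) * sqrt (real (zss T))"
    by (intro exI[of _ T] exI[of _ T']) simp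
qed simp

lemma b_del: "\<exists>c>0. \<forall>m. \<exists>T T' :: nat list. zss T \<ge> m \<and> length T' + 1 = length T \<and> ed T T' = 1 \<and>
        real (zss T') - real (zss T) \<ge> 2 * real (zss T) - c * sqrt (real (zss T))"
proof (intro exI[of _ "3 * 41"] conjI allI)
  fix m :: nat
  define r where "r = m + 2"
  have r2: "2 \<le> r" by (simp add: r_def)
  define T where "T = T3 r [1] @ replicate 0 6"
  define T' where "T' = T3 r [] @ replicate 0 6"
  define x where "x = real (r - 1)"
  have x1: "1 \<le> x" using r2 by (simp add: x_def)
  have z1: "x \<le> real (zss T)" using F3_LB0[OF r2, of "replicate 0 6"] by (simp add: x_def T_def)
  have "(3 - 1) * real (zss T) - (3 * 41) * sqrt (real (zss T)) \<le> real (zss T') - real (zss T)"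
  proof (rule b_bound[OF x1 _ _ _ z1])
    show "3 * x \<le> real (zss T')" using F3_LB'[OF r2, of "[]" "replicate 0 6"] by (simp add: x_def T'_def)
    show "real (zss T) \<le> x + 41 * sqrt x"
      using F3_UB[OF r2, of 0] E3_0[OF r2] by (simp add: x_def T_def PC_def)
  qed auto
  moreover have "m \<le> zss T" using z1 by (simp add: x_def r_def)
  moreover have "length T' + 1 = length T" using len_T3 by (simp add: T_def T'_def)
  moreover have "ed T T' = 1" by (unfold T_def T'_def, rule ed_T3)
  ultimately show "\<exists>T T' :: nat list. zss T \<ge> m \<and> length T' + 1 = length T \<and> ed T T' = 1 \<and>
        real (zss T') - real (zss T) \<ge> 2 * real (zss T) - (3 * 41) * sqrt (real (zss T))"
    by (intro exI[of _ T] exI[of _ T']) simp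
qed simp

lemma b_ins: "\<exists>c>0. \<forall>m. \<exists>T T' :: nat list. zss T \<ge> m \<and> length T' = length T + 1 \<and> ed T T' = 1 \<and>
        real (zss T') - real (zss T) \<ge> real (zss T) - c * sqrt (real (zss T))"
proof (intro exI[of _ "2 * 20"] conjI allI)
  fix m :: nat
  define k where "k = m + 1"
  have k1: "1 \<le> k" by (simp add: k_def)
  define T where "T = T2 k [1] @ replicate 0 6"
  define T' where "T' = T2 k [5, 1] @ replicate 0 6"
  define x where "x = real k"
  have x1: "1 \<le> x" using k1 by (simp add: x_def)
  have z1: "x \<le> real (zss T)" using F2_LB0[of k "replicate 0 6"] by (simp add: x_def T_def)
  have "(2 - 1) * real (zss T) - (2 * 20) * sqrt (real (zss T)) \<le> real (zss T') - real (zss T)"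
  proof (rule b_bound[OF x1 _ _ _ z1])
    show "2 * x \<le> real (zss T')" using F2_LB'[of "[5, 1]" k "replicate 0 6"] by (simp add: x_def T'_def)
    show "real (zss T) \<le> x + 20 * sqrt x"
      using F2_UB[OF k1, of 0] E2_0[OF k1] by (simp add: x_def T_def PC_def)
  qed auto
  moreover have "m \<le> zss T" using z1 by (simp add: x_def k_def)
  moreover have "length T' = length T + 1" using len_T2 by (simp add: T_def T'_def)
  moreover have "ed T T' = 1" by (unfold T_def T'_def, rule ed_T2)
  ultimately show "\<exists>T T' :: nat list. zss T \<ge> m \<and> length T' = length T + 1 \<and> ed T T' = 1 \<and>
        real (zss T') - real (zss T) \<ge> real (zss T) - (2 * 20) * sqrt (real (zss T))"
    by (intro exI[of _ T] exI[of _ T']) simp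
qed simp

lemma omega_from_bound: assumes "\<And>n. N \<le> n \<Longrightarrow> sqrt (real n) / 12 \<le> f n"
  shows "f \<in> \<Omega>(\<lambda>n. sqrt (real n))"
proof (rule landau_omega.bigI[where c="1/12"])
  show "\<forall>\<^sub>F x in at_top. 1 / 12 * norm (sqrt (real x)) \<le> norm (f x)"
    unfolding eventually_at_top_linorder
  proof (intro exI allI impI)
    fix n assume "N \<le> n"
    hence "sqrt (real n) / 12 \<le> f n" by (rule assms)
    thus "1 / 12 * norm (sqrt (real n)) \<le> norm (f n)" by simp
  qed
qed simp

lemma AS_core: fixes zp z :: nat and m n :: nat
  assumes m: "78400 \<le> m" and n: "n \<le> 27 * m ^ 2" and zp: "2 * m \<le> zp"
    and z: "real z \<le> real m + 140 * sqrt (real m)"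
  shows "sqrt (real n) / 12 \<le> real zp - real z"
proof -
  have sm: "280 \<le> sqrt (real m)"
  proof (rule real_le_rsqrt)
    show "280\<^sup>2 \<le> real m" using m by simp
  qed
  have mm: "sqrt (real m) * sqrt (real m) = real m" by simp
  have "140 * sqrt (real m) \<le> real m / 2"
  proof -
    have "280 * sqrt (real m) \<le> sqrt (real m) * sqrt (real m)" using sm by (intro mult_right_mono) auto
    thus ?thesis using mm by simp
  qed
  hence a: "real m / 2 \<le> real zp - real z" using zp z by linarith
  have "sqrt (real n) \<le> sqrt (27 * real m ^ 2)"
  proof -
    have "real n \<le> 27 * real m ^ 2" using n by (metis of_nat_le_iff of_nat_mult of_nat_numeral of_nat_power)
    thus ?thesis by simp
  qed
  also have "\<dots> = sqrt 27 * real m" by (simp add: real_sqrt_mult)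
  also have "\<dots> \<le> 6 * real m"
  proof -
    have "sqrt (27::real) \<le> 6" by (rule real_sqrt_le_iff[THEN iffD2, of 27 36, simplified]) 
    thus ?thesis by (intro mult_right_mono) auto
  qed
  finally show ?thesis using a by simp
qed

lemma c_sub: "AS_sub \<in> \<Omega>(\<lambda>n. sqrt (real n))"
proof (rule omega_from_bound[where N="N2 78400"])
  fix n assume n: "N2 78400 \<le> n"
  obtain m p where mp: "78400 \<le> m" "1 \<le> m" "N2 m + p = n" "p \<le> 27 * m ^ 2" "n \<le> 27 * m ^ 2"
    using F2_at[OF n] by auto
  define T where "T = T2 m [1] @ replicate p 6"
  define T' where "T' = T2 m [5] @ replicate p 6"
  have lT: "length T = n" "length T' = n" using mp len_T2 by (auto simp: T_def T'_def N2_def)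
  have as: "real (zss T') - real (zss T) \<le> AS_sub n"
    by (rule AS_sub_ge[OF lT]) (unfold T_def T'_def, rule ed_T2)
  have "sqrt (real n) / 12 \<le> real (zss T') - real (zss T)"
  proof (rule AS_core[OF mp(1) mp(5)])
    show "2 * m \<le> zss T'" using F2_LB'[of "[5]" m "replicate p 6"] by (simp add: T'_def)
    show "real (zss T) \<le> real m + 140 * sqrt (real m)"
      using F2_UB[OF mp(2), of p] E2_pad[OF mp(2,4)] by (simp add: T_def)
  qed
  thus "sqrt (real n) / 12 \<le> AS_sub n" using as by simp
qed

lemma c_del: "AS_del \<in> \<Omega>(\<lambda>n. sqrt (real n))"
proof (rule omega_from_bound[where N="N2 78400"])
  fix n assume n: "N2 78400 \<le> n"
  obtain m p where mp: "78400 \<le> m" "1 \<le> m" "N2 m + p = n" "p \<le> 27 * m ^ 2" "n \<le> 27 * m ^ 2"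
    using F2_at[OF n] by auto
  define T where "T = T2 m [1] @ replicate p 6"
  define T' where "T' = T2 m [] @ replicate p 6"
  have lT: "length T = n" "length T' + 1 = n" using mp len_T2 by (auto simp: T_def T'_def N2_def)
  have as: "real (zss T') - real (zss T) \<le> AS_del n"
    by (rule AS_del_ge[OF lT]) (unfold T_def T'_def, rule ed_T2)
  have "sqrt (real n) / 12 \<le> real (zss T') - real (zss T)"
  proof (rule AS_core[OF mp(1) mp(5)])
    show "2 * m \<le> zss T'" using F2_LB'[of "[]" m "replicate p 6"] by (simp add: T'_def)
    show "real (zss T) \<le> real m + 140 * sqrt (real m)"
      using F2_UB[OF mp(2), of p] E2_pad[OF mp(2,4)] by (simp add: T_def)
  qed
  thus "sqrt (real n) / 12 \<le> AS_del n" using as by simp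
qed

lemma c_ins: "AS_ins \<in> \<Omega>(\<lambda>n. sqrt (real n))"
proof (rule omega_from_bound[where N="N2 78400"])
  fix n assume n: "N2 78400 \<le> n"
  obtain m p where mp: "78400 \<le> m" "1 \<le> m" "N2 m + p = n" "p \<le> 27 * m ^ 2" "n \<le> 27 * m ^ 2"
    using F2_at[OF n] by auto
  define T where "T = T2 m [1] @ replicate p 6"
  define T' where "T' = T2 m [5, 1] @ replicate p 6"
  have lT: "length T = n" "length T' = n + 1" using mp len_T2 by (auto simp: T_def T'_def N2_def)
  have as: "real (zss T') - real (zss T) \<le> AS_ins n"
    by (rule AS_ins_ge[OF lT]) (unfold T_def T'_def, rule ed_T2)
  have "sqrt (real n) / 12 \<le> real (zss T') - real (zss T)"
  proof (rule AS_core[OF mp(1) mp(5)])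
    show "2 * m \<le> zss T'" using F2_LB'[of "[5, 1]" m "replicate p 6"] by (simp add: T'_def)
    show "real (zss T) \<le> real m + 140 * sqrt (real m)"
      using F2_UB[OF mp(2), of p] E2_pad[OF mp(2,4)] by (simp add: T_def)
  qed
  thus "sqrt (real n) / 12 \<le> AS_ins n" using as by simp
qed

theorem mainTheorem12:
  shows
  \<comment> \<open>substitutions\<close>
  "liminf (\<lambda>n. ereal (MS_sub n)) \<ge> 3
   \<and> (\<exists>c>0. \<forall>m. \<exists>T T' :: nat list. zss T \<ge> m \<and> length T' = length T \<and> ed T T' = 1 \<and>
        real (zss T') - real (zss T) \<ge> 2 * real (zss T) - c * sqrt (real (zss T)))
   \<and> AS_sub \<in> \<Omega>(\<lambda>n. sqrt (real n))
   \<and> liminf (\<lambda>n. ereal (MS_ins n)) \<ge> 2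
   \<and> (\<exists>c>0. \<forall>m. \<exists>T T' :: nat list. zss T \<ge> m \<and> length T' = length T + 1 \<and> ed T T' = 1 \<and>
        real (zss T') - real (zss T) \<ge> real (zss T) - c * sqrt (real (zss T)))
   \<and> AS_ins \<in> \<Omega>(\<lambda>n. sqrt (real n))
   \<and> liminf (\<lambda>n. ereal (MS_del n)) \<ge> 3
   \<and> (\<exists>c>0. \<forall>m. \<exists>T T' :: nat list. zss T \<ge> m \<and> length T' + 1 = length T \<and> ed T T' = 1 \<and>
        real (zss T') - real (zss T) \<ge> 2 * real (zss T) - c * sqrt (real (zss T)))
   \<and> AS_del \<in> \<Omega>(\<lambda>n. sqrt (real n))"
  using a_sub a_ins a_del b_sub b_ins b_del c_sub c_ins c_del by simp


end
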